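(* Let $\xi^*=\sum_{d=1}^S w_d^*\bar\xi_d$ be an invariant design which is $D$-optimal on $\mathcal{X}^{(S)}$ (i.e. $\mathbf{M}(\xi^* )$ is nonsingular and $\det\mathbf{M}(\xi^* )\ge\det\mathbf{M}(\xi)$ for every approximate design $\xi$ on $\mathcal{X}^{(S)}$). Then the set $\{d: w^*_d>0\}$ of comparison depths used by $\xi^*$ has at most three elements, and it is contained in $\{d^*,d^*+1,S\}$ for some $d^*\in\{1,\dots,S\}$.
   Context: Fix integers $v\ge 2$, $K\ge 3$ and $S$ with $3\le S\le K$. Let $\mathbf{e}_i$ denote the $i$th unit vector of $\mathbb{R}^{v-1}$ and $\mathbf{1}_{v-1}$ the all-ones vector. Define $\mathbf{f}_1:\{0,1,\dots,v\}\to\mathbb{R}^{v-1}$ by $\mathbf{f}_1(i)=\mathbf{e}_i$ for $1\le i\le v-1$, $\mathbf{f}_1(v)=-\mathbf{1}_{v-1}$, $\mathbf{f}_1(0)=\mathbf{0}$. For $\mathbf{i}\in\{0,\dots,v\}^K$ let $\mathbf{f}(\mathbf{i})\in\mathbb{R}^p$ stack $\mathbf{f}_1(i_k)$ ($k=1,\dots,K$), then $\mathbf{f}_1(i_k)\otimes\mathbf{f}_1(i_\ell)$ ($k<\ell$), then $\mathbf{f}_1(i_k)\otimes\mathbf{f}_1(i_\ell)\otimes\mathbf{f}_1(i_m)$ ($k<\ell<m$); $p=K(v-1)+\binom K2(v-1)^2+\binom K3(v-1)^3$. The design region $\mathcal{X}^{(S)}$ is the set of ordered pairs $(\mathbf{i},\mathbf{j})$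 in $\{0,\dots,v\}^K$ for which there is a set $A$ of exactly $S$ attributes with $i_k,j_k\in\{1,\dots,v\}$ for $k\in A$ and $i_k=j_k=0$ for $k\notin A$; $\mathcal{X}^{(S)}_d$ (comparison depth $d$) is the subset with $i_k\ne j_k$ for exactly $d$ indices $k$. An approximate design is a finitely supported probability measure $\xi$ on $\mathcal{X}^{(S)}$ with information matrix $\mathbf{M}(\xi)=\sum\xi(\mathbf{i},\mathbf{j})(\mathbf{f}(\mathbf{i})-\mathbf{f}(\mathbf{j}))(\mathbf{f}(\mathbf{i})-\mathbf{f}(\mathbf{j}))^\top$; $\bar\xi_d$ is the uniform design on $\mathcal{X}^{(S)}_d$, and designs $\sum_{d=1}^S w_d\bar\xi_d$ ($w_d\ge0$, $\sum w_d=1$) are called invariant. *)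

theory Defs
  imports "Jordan_Normal_Form.Determinant"
begin

definition f1 :: "nat \<Rightarrow> nat \<Rightarrow> real vec" where
  "f1 v i = vec (v - 1) (\<lambda>r. if i = 0 then 0 else if i = v then -1
                               else if r + 1 = i then 1 else 0)"

definition kron_vec :: "real vec \<Rightarrow> real vec \<Rightarrow> real vec" where
  "kron_vec a b = vec (dim_vec a * dim_vec b) (\<lambda>j. a $ (j div dim_vec b) * b $ (j mod dim_vec b))"

definition concat_vec :: "real vec list \<Rightarrow> real vec" where
  "concat_vec xs = foldr (\<lambda>a b. a @\<^sub>v b) xs (vec 0 (\<lambda>_. 0))"

definition regvec :: "nat \<Rightarrow> nat \<Rightarrow> nat list \<Rightarrow> real vec" where
  "regvec v K i = concat_vec
     ([f1 v (i ! k). k \<leftarrow> [0..<K]] @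
      [kron_vec (f1 v (i ! k)) (f1 v (i ! l)). k \<leftarrow> [0..<K], l \<leftarrow> [Suc k..<K]] @
      [kron_vec (kron_vec (f1 v (i ! k)) (f1 v (i ! l))) (f1 v (i ! m)).
          k \<leftarrow> [0..<K], l \<leftarrow> [Suc k..<K], m \<leftarrow> [Suc l..<K]])"

definition nparams :: "nat \<Rightarrow> nat \<Rightarrow> nat" where
  "nparams v K = K * (v - 1) + (K choose 2) * (v - 1)^2 + (K choose 3) * (v - 1)^3"

definition profiles :: "nat \<Rightarrow> nat \<Rightarrow> nat list set" where
  "profiles v K = {xs. length xs = K \<and> set xs \<subseteq> {0..v}}"

definition design_region :: "nat \<Rightarrow> nat \<Rightarrow> nat \<Rightarrow> (nat list \<times> nat list) set" where
  "design_region v K S = {(i, j). i \<in> profiles v K \<and> j \<in> profiles v K \<and>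
     (\<exists>A \<subseteq> {..<K}. card A = S \<and>
        (\<forall>k<K. (k \<in> A \<longrightarrow> i ! k \<in> {1..v} \<and> j ! k \<in> {1..v}) \<and>
               (k \<notin> A \<longrightarrow> i ! k = 0 \<and> j ! k = 0)))}"

definition depth_region :: "nat \<Rightarrow> nat \<Rightarrow> nat \<Rightarrow> nat \<Rightarrow> (nat list \<times> nat list) set" where
  "depth_region v K S d = {(i, j) \<in> design_region v K S. card {k. k < K \<and> i ! k \<noteq> j ! k} = d}"

definition is_design :: "nat \<Rightarrow> nat \<Rightarrow> nat \<Rightarrow> (nat list \<times> nat list \<Rightarrow> real) \<Rightarrow> bool" where
  "is_design v K S \<xi> \<longleftrightarrow> (\<forall>x. \<xi> x \<ge> 0) \<and> (\<forall>x. x \<notin> design_region v K S \<longrightarrow> \<xi> x = 0)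
     \<and> (\<Sum>x\<in>design_region v K S. \<xi> x) = 1"

definition info_matrix :: "nat \<Rightarrow> nat \<Rightarrow> nat \<Rightarrow> (nat list \<times> nat list \<Rightarrow> real) \<Rightarrow> real mat" where
  "info_matrix v K S \<xi> = mat (nparams v K) (nparams v K) (\<lambda>(r, c).
     \<Sum>x\<in>design_region v K S. \<xi> x *
        ((regvec v K (fst x) - regvec v K (snd x)) $ r) *
        ((regvec v K (fst x) - regvec v K (snd x)) $ c))"

definition uniform_depth_design :: "nat \<Rightarrow> nat \<Rightarrow> nat \<Rightarrow> nat \<Rightarrow> (nat list \<times> nat list \<Rightarrow> real)" where
  "uniform_depth_design v K S d = (\<lambda>x. if x \<in> depth_region v K S d
      then 1 / real (card (depth_region v K S d)) else 0)"

definition D_optimal :: "nat \<Rightarrow> nat \<Rightarrow> nat \<Rightarrow> (nat list \<times> nat list \<Rightarrow> real) \<Rightarrow> bool" where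
  "D_optimal v K S \<xi> \<longleftrightarrow> is_design v K S \<xi> \<and> det (info_matrix v K S \<xi>) \<noteq> 0 \<and>
     (\<forall>\<eta>. is_design v K S \<eta> \<longrightarrow> det (info_matrix v K S \<eta>) \<le> det (info_matrix v K S \<xi>))"

end

theory Submission
  imports Defs
begin


fun blockvec :: "nat \<Rightarrow> nat list \<Rightarrow> nat list \<Rightarrow> real vec" where
  "blockvec v i [k] = f1 v (i!k)"
| "blockvec v i [k,l] = kron_vec (f1 v (i!k)) (f1 v (i!l))"
| "blockvec v i [k,l,m] = kron_vec (kron_vec (f1 v (i!k)) (f1 v (i!l))) (f1 v (i!m))"
| "blockvec v i _ = vec 0 (\<lambda>_. 0)"

definition Tlist :: "nat \<Rightarrow> nat list list" where
  "Tlist K = [[k]. k \<leftarrow> [0..<K]] @ [[k,l]. k \<leftarrow> [0..<K], l \<leftarrow> [Suc k..<K]] @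
     [[k,l,m]. k \<leftarrow> [0..<K], l \<leftarrow> [Suc k..<K], m \<leftarrow> [Suc l..<K]]"

lemma regvec_eq: "regvec v K i = concat_vec (map (blockvec v i) (Tlist K))"
  unfolding regvec_def Tlist_def by (simp add: map_concat comp_def)

lemma set_Tlist: "T \<in> set (Tlist K) \<longleftrightarrow>
   (\<exists>k<K. T = [k]) \<or> (\<exists>k l. k < l \<and> l < K \<and> T = [k,l]) \<or> (\<exists>k l m. k < l \<and> l < m \<and> m < K \<and> T = [k,l,m])"
  unfolding Tlist_def by (auto simp: image_iff; force)

lemma dim_f1[simp]: "dim_vec (f1 v a) = v - 1"
  by (simp add: f1_def)

lemma index_f1: "\<alpha> < v - 1 \<Longrightarrow> f1 v a $ \<alpha> = (if a = 0 then 0 else if a = v then -1 else if \<alpha> + 1 = a then 1 else 0)"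
  by (simp add: f1_def)

lemma dim_kron[simp]: "dim_vec (kron_vec a b) = dim_vec a * dim_vec b"
  by (simp add: kron_vec_def)

lemma index_kron: "j < dim_vec a * dim_vec b \<Longrightarrow> kron_vec a b $ j = a $ (j div dim_vec b) * b $ (j mod dim_vec b)"
  by (simp add: kron_vec_def)

lemma dim_concat_vec: "dim_vec (concat_vec xs) = sum_list (map dim_vec xs)"
  by (induction xs) (auto simp: concat_vec_def)

fun loc :: "nat list \<Rightarrow> nat \<Rightarrow> nat \<times> nat" where
  "loc [] r = (0, r)"
| "loc (n # ns) r = (if r < n then (0, r) else (Suc (fst (loc ns (r - n))), snd (loc ns (r - n))))"

lemma concat_vec_index:
  "r < sum_list (map dim_vec xs) \<Longrightarrow> fst (loc (map dim_vec xs) r) < length xs \<and>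
     snd (loc (map dim_vec xs) r) < dim_vec (xs ! fst (loc (map dim_vec xs) r)) \<and>
     concat_vec xs $ r = (xs ! fst (loc (map dim_vec xs) r)) $ snd (loc (map dim_vec xs) r)"
proof (induction xs arbitrary: r)
  case Nil thus ?case by simp
next
  case (Cons a xs)
  have cv: "concat_vec (a # xs) = a @\<^sub>v concat_vec xs" by (simp add: concat_vec_def)
  show ?case
  proof (cases "r < dim_vec a")
    case True thus ?thesis using Cons.prems by (simp add: cv dim_concat_vec)
  next
    case False
    with Cons.prems have "r - dim_vec a < sum_list (map dim_vec xs)" by simp
    from Cons.IH[OF this] False show ?thesis using Cons.prems by (simp add: cv dim_concat_vec)
  qed
qed

definition dl :: "nat \<Rightarrow> nat \<Rightarrow> nat list" where
  "dl v K = map (\<lambda>T. (v-1) ^ length T) (Tlist K)"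

lemma dim_blockvec: "T \<in> set (Tlist K) \<Longrightarrow> dim_vec (blockvec v i T) = (v-1) ^ length T"
  unfolding set_Tlist by (auto simp: power2_eq_square power3_eq_cube)

lemma map_dim_blockvec: "map dim_vec (map (blockvec v i) (Tlist K)) = dl v K"
  unfolding dl_def by (simp add: dim_blockvec)


lemma cnt2: "(\<Sum>l=a..<K. K - Suc l) = (K - a) choose 2"
proof (induction K)
  case 0 thus ?case by simp
next
  case (Suc K)
  show ?case
  proof (cases "a \<le> K")
    case True
    have "(\<Sum>l=a..<Suc K. Suc K - Suc l) = (\<Sum>l=a..<K. (K - Suc l) + 1)"
      using True by (simp add: sum.atLeastLessThan_Suc Suc_diff_Suc)
    also have "\<dots> = (\<Sum>l=a..<K. K - Suc l) + (\<Sum>l=a..<K. 1)" by (rule sum.distrib)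
    also have "\<dots> = ((K - a) choose 2) + (K - a)" using Suc by simp
    also have "\<dots> = (Suc K - a) choose 2" using True
      by (simp add: Suc_diff_le numeral_2_eq_2 add.commute)
    finally show ?thesis .
  next
    case False thus ?thesis by simp
  qed
qed

lemma cnt3: "(\<Sum>k=0..<K. \<Sum>l=Suc k..<K. K - Suc l) = K choose 3"
proof -
  have "(\<Sum>k=0..<K. \<Sum>l=Suc k..<K. K - Suc l) = (\<Sum>k=0..<K. (K - Suc k) choose 2)"
    by (simp add: cnt2)
  also have "\<dots> = (\<Sum>j=0..<K. j choose 2)"
    by (rule sum.reindex_bij_witness[where i="\<lambda>j. K - Suc j" and j="\<lambda>j. K - Suc j"]) auto
  also have "\<dots> = K choose 3"
  proof (cases K)
    case 0 thus ?thesis by simp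
  next
    case (Suc n)
    have "(\<Sum>j=0..<K. j choose 2) = (\<Sum>j\<le>n. j choose 2)" using Suc by (simp add: atLeast0LessThan lessThan_Suc_atMost)
    also have "\<dots> = Suc n choose Suc 2" by (rule sum_choose_upper)
    finally show ?thesis using Suc by (simp add: numeral_3_eq_3)
  qed
  finally show ?thesis .
qed

lemma sum_list_concat': "sum_list (concat xss) = sum_list (map sum_list (xss::nat list list))"
  by (induction xss) auto

lemma sum_dl: "sum_list (dl v K) = nparams v K"
proof -
  have "sum_list (dl v K) = K * (v-1) + (\<Sum>k=0..<K. \<Sum>l=Suc k..<K. 1) * (v-1)^2 +
        (\<Sum>k=0..<K. \<Sum>l=Suc k..<K. K - Suc l) * (v-1)^3"
    by (simp add: dl_def Tlist_def map_concat comp_def sum_list_triv sum_list_upt length_concat sum_list_concat' sum_distrib_right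
       power2_eq_square power3_eq_cube mult.assoc flip: sum_set_upt_conv_sum_list_nat)
  also have "(\<Sum>k=0..<K. \<Sum>l=Suc k..<K. (1::nat)) = K choose 2"
  proof -
    have "(\<Sum>k=0..<K. \<Sum>l=Suc k..<K. (1::nat)) = (\<Sum>k=0..<K. K - Suc k)" by simp
    also have "\<dots> = K choose 2" using cnt2[where a=0 and K=K] by (simp only: diff_zero)
    finally show ?thesis .
  qed
  finally show ?thesis using cnt3 by (simp add: nparams_def)
qed


fun gam :: "nat \<Rightarrow> nat list \<Rightarrow> nat \<Rightarrow> nat \<Rightarrow> nat" where
  "gam n [k] q x = q"
| "gam n [k,l] q x = (if x = k then q div n else q mod n)"
| "gam n [k,l,m] q x = (if x = k then q div n div n else if x = l then q div n mod n else q mod n)"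
| "gam n _ q x = 0"

lemma blockvec_entry:
  assumes "T \<in> set (Tlist K)" "q < (v-1) ^ length T" "v \<ge> 2"
  shows "blockvec v i T $ q = (\<Prod>k\<in>set T. f1 v (i!k) $ gam (v-1) T q k)
        \<and> (\<forall>k\<in>set T. gam (v-1) T q k < v - 1)"
proof -
  let ?n = "v - 1"
  have n: "?n > 0" using assms by simp
  from assms(1)[unfolded set_Tlist] show ?thesis
  proof (elim disjE exE conjE)
    fix k assume "k < K" "T = [k]" thus ?thesis using assms by simp
  next
    fix k l assume kl: "k < l" "l < K" "T = [k,l]"
    have q: "q < ?n * ?n" using assms kl by (simp add: power2_eq_square)
    hence "q div ?n < ?n" using n by (simp add: div_less_iff_less_mult)
    moreover have "q mod ?n < ?n" using n by simp
    ultimately show ?thesis using kl q by (simp add: index_kron)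
  next
    fix k l m assume klm: "k < l" "l < m" "m < K" "T = [k,l,m]"
    have q: "q < ?n * ?n * ?n" using assms klm by (simp add: power3_eq_cube mult.assoc)
    hence o1: "q div ?n < ?n * ?n" using n by (simp add: div_less_iff_less_mult)
    hence "q div ?n div ?n < ?n" using n by (simp add: div_less_iff_less_mult)
    moreover have "q div ?n mod ?n < ?n" "q mod ?n < ?n" using n by simp_all
    ultimately show ?thesis using klm q o1 by (simp add: index_kron)
  qed
qed

definition bix :: "nat \<Rightarrow> nat \<Rightarrow> nat \<Rightarrow> nat" where "bix v K r = fst (loc (dl v K) r)"
definition ofs :: "nat \<Rightarrow> nat \<Rightarrow> nat \<Rightarrow> nat" where "ofs v K r = snd (loc (dl v K) r)"
definition TL :: "nat \<Rightarrow> nat \<Rightarrow> nat \<Rightarrow> nat list" where "TL v K r = Tlist K ! bix v K r"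
definition Tset :: "nat \<Rightarrow> nat \<Rightarrow> nat \<Rightarrow> nat set" where "Tset v K r = set (TL v K r)"
definition gm :: "nat \<Rightarrow> nat \<Rightarrow> nat \<Rightarrow> nat \<Rightarrow> nat" where "gm v K r k = gam (v-1) (TL v K r) (ofs v K r) k"


lemma regvec_entry:
  assumes "r < nparams v K" "v \<ge> 2"
  shows "regvec v K i $ r = (\<Prod>k\<in>Tset v K r. f1 v (i!k) $ gm v K r k)"
    and "\<forall>k\<in>Tset v K r. gm v K r k < v - 1"
    and "TL v K r \<in> set (Tlist K)"
proof -
  let ?xs = "map (blockvec v i) (Tlist K)"
  have r: "r < sum_list (map dim_vec ?xs)" by (metis map_dim_blockvec sum_dl assms(1))
  note c = concat_vec_index[OF r, unfolded map_dim_blockvec]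
  have b: "bix v K r < length (Tlist K)" using c by (simp add: bix_def)
  hence T: "TL v K r \<in> set (Tlist K)" by (simp add: TL_def)
  have b': "fst (loc (dl v K) r) < length (Tlist K)" using c by simp
  have q: "ofs v K r < (v-1) ^ length (TL v K r)"
  proof -
    have "snd (loc (dl v K) r) < dim_vec (map (blockvec v i) (Tlist K) ! fst (loc (dl v K) r))" using c by blast
    also have "\<dots> = dim_vec (blockvec v i (TL v K r))" by (simp add: nth_map[OF b'] TL_def bix_def)
    also have "\<dots> = (v-1) ^ length (TL v K r)" using dim_blockvec[OF T] by blast
    finally show ?thesis by (simp add: ofs_def)
  qed
  note be = blockvec_entry[OF T q assms(2), of i]
  show "regvec v K i $ r = (\<Prod>k\<in>Tset v K r. f1 v (i!k) $ gm v K r k)"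
    using c be by (simp add: regvec_eq bix_def ofs_def TL_def Tset_def gm_def nth_map[OF b'])
  show "\<forall>k\<in>Tset v K r. gm v K r k < v - 1" using be by (simp add: Tset_def gm_def)
  show "TL v K r \<in> set (Tlist K)" by (rule T)
qed

lemma dim_regvec: "dim_vec (regvec v K i) = nparams v K"
  by (metis regvec_eq dim_concat_vec map_dim_blockvec sum_dl)



definition AD :: "nat \<Rightarrow> nat \<Rightarrow> nat \<Rightarrow> (nat set \<times> nat set) set" where
  "AD K S d = {(A,D). A \<subseteq> {..<K} \<and> card A = S \<and> D \<subseteq> A \<and> card D = d}"

definition Zs :: "nat \<Rightarrow> nat set \<Rightarrow> nat set \<Rightarrow> nat \<Rightarrow> (nat \<times> nat) set" where
  "Zs v A D k = (if k \<in> A then (if k \<in> D then {(a,b). a \<in> {1..v} \<and> b \<in> {1..v} \<and> a \<noteq> b}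
                  else (\<lambda>a. (a,a)) ` {1..v}) else {(0,0)})"

definition enc :: "nat \<Rightarrow> (nat \<Rightarrow> nat \<times> nat) \<Rightarrow> nat list \<times> nat list" where
  "enc K z = (map (\<lambda>k. fst (z k)) [0..<K], map (\<lambda>k. snd (z k)) [0..<K])"

definition SG :: "nat \<Rightarrow> nat \<Rightarrow> nat \<Rightarrow> nat \<Rightarrow> ((nat set \<times> nat set) \<times> (nat \<Rightarrow> nat \<times> nat)) set" where
  "SG v K S d = (SIGMA ad:AD K S d. PiE {..<K} (Zs v (fst ad) (snd ad)))"

lemma finite_AD: "finite (AD K S d)"
proof -
  have "AD K S d \<subseteq> Pow {..<K} \<times> Pow {..<K}" by (auto simp: AD_def)
  thus ?thesis by (rule finite_subset) auto
qed

lemma finite_Zs: "finite (Zs v A D k)"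
proof -
  have "Zs v A D k \<subseteq> {0..v} \<times> {0..v}" by (auto simp: Zs_def)
  thus ?thesis by (rule finite_subset) auto
qed

lemma finite_SG: "finite (SG v K S d)"
  unfolding SG_def by (intro finite_SigmaI finite_AD finite_PiE finite_Zs) auto

lemma Zs_fst_nz: "y \<in> Zs v A D k \<Longrightarrow> (fst y \<noteq> 0) = (k \<in> A)"
  by (auto simp: Zs_def split: if_splits)
lemma Zs_diff: "y \<in> Zs v A D k \<Longrightarrow> (fst y \<noteq> snd y) = (k \<in> A \<and> k \<in> D)"
  by (auto simp: Zs_def split: if_splits)
lemma Zs_range: "y \<in> Zs v A D k \<Longrightarrow> fst y \<le> v \<and> snd y \<le> v"
  by (auto simp: Zs_def split: if_splits)

lemma SG_AD: assumes "((A,D),z) \<in> SG v K S d"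
  shows "A = {k. k < K \<and> fst (z k) \<noteq> 0} \<and> D = {k. k < K \<and> fst (z k) \<noteq> snd (z k)}"
proof -
  have AK: "A \<subseteq> {..<K}" "D \<subseteq> A" and zk: "\<And>k. k < K \<Longrightarrow> z k \<in> Zs v A D k"
    using assms by (auto simp: SG_def AD_def PiE_def Pi_def)
  have "k \<in> A \<longleftrightarrow> k < K \<and> fst (z k) \<noteq> 0" for k
    using AK zk[of k] Zs_fst_nz[of "z k" v A D k] by blast
  moreover have "k \<in> D \<longleftrightarrow> k < K \<and> fst (z k) \<noteq> snd (z k)" for k
    using AK zk[of k] Zs_diff[of "z k" v A D k] by blast
  ultimately show ?thesis by blast
qed

lemma enc_inj: "inj_on (\<lambda>(ad,z). enc K z) (SG v K S d)"
proof (rule inj_onI)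
  fix x y assume x: "x \<in> SG v K S d" and y: "y \<in> SG v K S d"
    and exy: "(\<lambda>(ad,z). enc K z) x = (\<lambda>(ad,z). enc K z) y"
  obtain A D z where xx: "x = ((A,D),z)" by (metis prod.collapse)
  obtain A' D' z' where yy: "y = ((A',D'),z')" by (metis prod.collapse)
  have s: "((A,D),z) \<in> SG v K S d" "((A',D'),z') \<in> SG v K S d" using x y xx yy by auto
  have e: "enc K z = enc K z'" using exy xx yy by simp
  have zk: "z k = z' k" if "k < K" for k
    using e that by (auto simp: enc_def prod_eq_iff)
  have z: "z = z'"
  proof
    fix k show "z k = z' k"
      using s zk by (cases "k < K") (auto simp: SG_def PiE_def extensional_def)
  qed
  have A: "A = A'" and D: "D = D'" using SG_AD[OF s(1)] SG_AD[OF s(2)] z by auto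
  show "x = y" using A D z xx yy by simp
qed


lemma enc_nth: "k < K \<Longrightarrow> fst (enc K z) ! k = fst (z k) \<and> snd (enc K z) ! k = snd (z k)"
  by (simp add: enc_def)

lemma SG_in_region: assumes "((A,D),z) \<in> SG v K S d" shows "enc K z \<in> depth_region v K S d"
proof -
  have AK: "A \<subseteq> {..<K}" "card A = S" "D \<subseteq> A" "card D = d" and zk: "\<And>k. k < K \<Longrightarrow> z k \<in> Zs v A D k"
    using assms by (auto simp: SG_def AD_def PiE_def Pi_def)
  note ad = SG_AD[OF assms]
  have zr: "\<And>k. k < K \<Longrightarrow> fst (z k) \<le> v \<and> snd (z k) \<le> v" using zk Zs_range by blast
  have pi: "fst (enc K z) \<in> profiles v K" "snd (enc K z) \<in> profiles v K"
    using zr by (auto simp: profiles_def enc_def)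
  have "\<forall>k<K. (k \<in> A \<longrightarrow> fst (enc K z) ! k \<in> {1..v} \<and> snd (enc K z) ! k \<in> {1..v}) \<and>
               (k \<notin> A \<longrightarrow> fst (enc K z) ! k = 0 \<and> snd (enc K z) ! k = 0)"
  proof (intro allI impI conjI)
    fix k assume k: "k < K"
    { assume "k \<in> A" thus "fst (enc K z) ! k \<in> {1..v}" "snd (enc K z) ! k \<in> {1..v}"
        using zk[OF k] enc_nth[OF k, of z] by (auto simp: Zs_def split: if_splits) }
    { assume "k \<notin> A" thus "fst (enc K z) ! k = 0" "snd (enc K z) ! k = 0"
        using zk[OF k] enc_nth[OF k, of z] by (auto simp: Zs_def split: if_splits) }
  qed
  hence dr: "enc K z \<in> design_region v K S" using pi AK
    unfolding design_region_def by (cases "enc K z") auto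
  have "{k. k < K \<and> fst (enc K z) ! k \<noteq> snd (enc K z) ! k} = D"
    using ad enc_nth by auto
  thus ?thesis using dr AK unfolding depth_region_def by (cases "enc K z") auto
qed

lemma region_image: "depth_region v K S d = (\<lambda>(ad,z). enc K z) ` SG v K S d"
proof
  show "(\<lambda>(ad,z). enc K z) ` SG v K S d \<subseteq> depth_region v K S d"
    using SG_in_region by fastforce
next
  show "depth_region v K S d \<subseteq> (\<lambda>(ad,z). enc K z) ` SG v K S d"
  proof
    fix x assume x: "x \<in> depth_region v K S d"
    obtain i j where ij: "x = (i,j)" by fastforce
    from x ij obtain A where A: "A \<subseteq> {..<K}" "card A = S"
      "\<forall>k<K. (k \<in> A \<longrightarrow> i ! k \<in> {1..v} \<and> j ! k \<in> {1..v}) \<and> (k \<notin> A \<longrightarrow> i ! k = 0 \<and> j ! k = 0)"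
      and pr: "i \<in> profiles v K" "j \<in> profiles v K"
      and dd: "card {k. k < K \<and> i ! k \<noteq> j ! k} = d"
      unfolding depth_region_def design_region_def by auto
    define D where "D = {k. k < K \<and> i ! k \<noteq> j ! k}"
    have DA: "D \<subseteq> A" using A unfolding D_def by auto
    define z where "z = restrict (\<lambda>k. (i ! k, j ! k)) {..<K}"
    have zP: "z \<in> PiE {..<K} (Zs v A D)"
    proof (rule PiE_I)
      fix k assume "k \<in> {..<K}"
      hence k: "k < K" by simp
      show "z k \<in> Zs v A D k"
        using A(3) k by (auto simp: z_def Zs_def D_def)
    next
      fix k assume "k \<notin> {..<K}" thus "z k = undefined" by (simp add: z_def)
    qed
    have "((A,D),z) \<in> SG v K S d" using zP A DA dd unfolding SG_def AD_def D_def by auto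
    moreover have "enc K z = (i,j)"
    proof -
      have "length i = K" "length j = K" using pr by (auto simp: profiles_def)
      thus ?thesis unfolding enc_def z_def by (auto intro: nth_equalityI)
    qed
    ultimately show "x \<in> (\<lambda>(ad,z). enc K z) ` SG v K S d" using ij by force
  qed
qed

lemma sum_region: "(\<Sum>x\<in>depth_region v K S d. g x) =
   (\<Sum>ad\<in>AD K S d. \<Sum>z\<in>PiE {..<K} (Zs v (fst ad) (snd ad)). g (enc K z))"
proof -
  have "(\<Sum>x\<in>depth_region v K S d. g x) = (\<Sum>y\<in>SG v K S d. g ((\<lambda>(ad,z). enc K z) y))"
    unfolding region_image by (subst sum.reindex[OF enc_inj]) (simp add: comp_def)
  also have "\<dots> = (\<Sum>ad\<in>AD K S d. \<Sum>z\<in>PiE {..<K} (Zs v (fst ad) (snd ad)). g (enc K z))"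
    unfolding SG_def by (subst sum.Sigma) (auto simp: finite_AD finite_Zs split_def intro!: finite_PiE)
  finally show ?thesis .
qed




lemma offdiag_eq: "{(a,b). a \<in> {1..v} \<and> b \<in> {1..v} \<and> a \<noteq> b} = (SIGMA a:{1..v::nat}. {1..v} - {a})"
  by auto

lemma sum_offdiag: "(\<Sum>y\<in>{(a,b). a \<in> {1..v} \<and> b \<in> {1..v} \<and> a \<noteq> b}. G (fst y) (snd y)) =
   (\<Sum>a\<in>{1..v::nat}. \<Sum>b\<in>{1..v}. G a b) - (\<Sum>a\<in>{1..v}. G a a :: real)"
proof -
  have "(\<Sum>y\<in>{(a,b). a \<in> {1..v} \<and> b \<in> {1..v} \<and> a \<noteq> b}. G (fst y) (snd y)) =
      (\<Sum>a\<in>{1..v}. \<Sum>b\<in>{1..v} - {a}. G a b)"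
    unfolding offdiag_eq by (subst sum.Sigma) (auto simp: split_def)
  also have "\<dots> = (\<Sum>a\<in>{1..v}. (\<Sum>b\<in>{1..v}. G a b) - G a a)"
    by (intro sum.cong refl) (simp add: sum_diff1)
  finally show ?thesis by (simp add: sum_subtractf)
qed

lemma sum_diag: "(\<Sum>y\<in>(\<lambda>a. (a,a)) ` {1..v::nat}. G (fst y) (snd y)) = (\<Sum>a\<in>{1..v}. G a a :: real)"
  by (subst sum.reindex) (auto simp: inj_on_def)

lemma Zsum: "(\<Sum>y\<in>Zs v A D k. G (fst y) (snd y)) =
  (if k \<in> A then (if k \<in> D then (\<Sum>a\<in>{1..v::nat}. \<Sum>b\<in>{1..v}. G a b) - (\<Sum>a\<in>{1..v}. G a a)
    else (\<Sum>a\<in>{1..v}. G a a)) else (G 0 0 :: real))"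
  using sum_offdiag[where v=v and G=G] sum_diag[where v=v and G=G] by (simp add: Zs_def)

lemma Zsum_fs: "(\<Sum>y\<in>Zs v A D k. p (fst y) * q (snd y)) =
  (if k \<in> A then (if k \<in> D then (\<Sum>a\<in>{1..v::nat}. p a) * (\<Sum>b\<in>{1..v}. q b) - (\<Sum>a\<in>{1..v}. p a * q a)
    else (\<Sum>a\<in>{1..v}. p a * q a)) else (p 0 * q 0 :: real))"
  using Zsum[where v=v and A=A and D=D and k=k and G="\<lambda>a b. p a * q b"] by (simp add: sum_product)

lemma Zsum_sf: "(\<Sum>y\<in>Zs v A D k. p (snd y) * q (fst y)) =
  (if k \<in> A then (if k \<in> D then (\<Sum>a\<in>{1..v::nat}. p a) * (\<Sum>b\<in>{1..v}. q b) - (\<Sum>a\<in>{1..v}. p a * q a)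
    else (\<Sum>a\<in>{1..v}. p a * q a)) else (p 0 * q 0 :: real))"
proof -
  have e: "(\<Sum>a\<in>{1..v}. \<Sum>b\<in>{1..v}. p b * q a) = (\<Sum>a\<in>{1..v::nat}. p a) * (\<Sum>b\<in>{1..v}. q b)"
    by (subst sum.swap) (simp add: sum_product)
  show ?thesis using Zsum[where v=v and A=A and D=D and k=k and G="\<lambda>a b. p b * q a"] e by (simp add: mult.commute)
qed

lemma Zsum_ff: "(\<Sum>y\<in>Zs v A D k. p (fst y) * q (fst y)) =
  (if k \<in> A then (if k \<in> D then (real v - 1) * (\<Sum>a\<in>{1..v::nat}. p a * q a)
    else (\<Sum>a\<in>{1..v}. p a * q a)) else (p 0 * q 0 :: real))"
  using Zsum[where v=v and A=A and D=D and k=k and G="\<lambda>a b. p a * q a"] by (simp add: algebra_simps flip: sum_distrib_left)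

lemma Zsum_ss: "(\<Sum>y\<in>Zs v A D k. p (snd y) * q (snd y)) =
  (if k \<in> A then (if k \<in> D then (real v - 1) * (\<Sum>a\<in>{1..v::nat}. p a * q a)
    else (\<Sum>a\<in>{1..v}. p a * q a)) else (p 0 * q 0 :: real))"
proof -
  have e: "(\<Sum>a\<in>{1..v}. \<Sum>b\<in>{1..v}. p b * q b) = real v * (\<Sum>a\<in>{1..v::nat}. p a * q a)"
    by (simp add: flip: sum_distrib_left)
  show ?thesis using Zsum[where v=v and A=A and D=D and k=k and G="\<lambda>a b. p b * q b"] e by (simp add: algebra_simps)
qed

lemma sum_ind: "(\<Sum>a\<in>{1..v::nat}. if a = c then (1::real) else 0) = (if c \<in> {1..v} then 1 else 0)"
  by (simp add: sum.delta)

lemma sum_f1: assumes "\<alpha> < v - 1" shows "(\<Sum>a\<in>{1..v}. f1 v a $ \<alpha>) = 0"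
proof -
  have "(\<Sum>a\<in>{1..v}. f1 v a $ \<alpha>) = (\<Sum>a\<in>{1..v}. (if a = \<alpha> + 1 then 1 else 0) + (-1) * (if a = v then 1 else 0))"
    using assms by (intro sum.cong refl) (auto simp: index_f1)
  also have "\<dots> = (\<Sum>a\<in>{1..v}. if a = \<alpha> + 1 then 1 else 0) + (-1) * (\<Sum>a\<in>{1..v}. if a = v then 1 else 0)"
    by (simp only: sum.distrib sum_distrib_left)
  also have "\<dots> = 0" proof -
    have "\<alpha> + 1 \<in> {1..v}" "v \<in> {1..v}" using assms by auto
    thus ?thesis unfolding sum_ind by simp
  qed
  finally show ?thesis .
qed

lemma sum_f1f1: assumes "\<alpha> < v - 1" "\<beta> < v - 1"
  shows "(\<Sum>a\<in>{1..v}. f1 v a $ \<alpha> * f1 v a $ \<beta>) = (if \<alpha> = \<beta> then 2 else 1)"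
proof -
  have "(\<Sum>a\<in>{1..v}. f1 v a $ \<alpha> * f1 v a $ \<beta>) =
     (\<Sum>a\<in>{1..v}. (if \<alpha> = \<beta> then 1 else 0) * (if a = \<alpha> + 1 then 1 else 0) + (if a = v then 1 else 0))"
    using assms by (intro sum.cong refl) (auto simp: index_f1)
  also have "\<dots> = (if \<alpha> = \<beta> then 1 else 0) * (\<Sum>a\<in>{1..v}. if a = \<alpha> + 1 then 1 else 0) + (\<Sum>a\<in>{1..v}. if a = v then 1 else 0)"
    by (simp only: sum.distrib sum_distrib_left)
  also have "\<dots> = (if \<alpha> = \<beta> then 2 else 1)" proof -
    have "\<alpha> + 1 \<in> {1..v}" "v \<in> {1..v}" using assms by auto
    thus ?thesis unfolding sum_ind by simp
  qed
  finally show ?thesis .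
qed




definition hf :: "nat \<Rightarrow> nat set \<Rightarrow> (nat \<Rightarrow> nat) \<Rightarrow> nat \<Rightarrow> nat \<Rightarrow> real" where
  "hf v T g k a = (if k \<in> T then f1 v a $ g k else 1)"

definition Qf :: "nat \<Rightarrow> nat \<Rightarrow> nat \<Rightarrow> real" where
  "Qf v \<alpha> \<beta> = (if \<alpha> = \<beta> then 2 else 1) / real v"

definition cnt :: "nat \<Rightarrow> nat set \<Rightarrow> nat set \<Rightarrow> nat \<Rightarrow> real" where
  "cnt v A D k = (if k \<in> A then (if k \<in> D then real v * (real v - 1) else real v) else 1)"

lemma card_Zs: "v \<ge> 2 \<Longrightarrow> real (card (Zs v A D k)) = cnt v A D k"
proof -
  assume v: "v \<ge> 2"
  have "(\<Sum>y\<in>Zs v A D k. (\<lambda>a b. 1::real) (fst y) (snd y)) = cnt v A D k"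
    by (subst Zsum) (simp add: cnt_def algebra_simps)
  thus ?thesis by (simp only: real_of_card)
qed

lemma Tset_sub: assumes "r < nparams v K" "v \<ge> 2" shows "Tset v K r \<subseteq> {..<K}"
proof -
  have "TL v K r \<in> set (Tlist K)" by (rule regvec_entry(3)[OF assms])
  thus ?thesis unfolding Tset_def set_Tlist by auto
qed

lemma F_prod: assumes "r < nparams v K" "v \<ge> 2"
  shows "regvec v K i $ r = (\<Prod>k\<in>{..<K}. hf v (Tset v K r) (gm v K r) k (i ! k))"
proof -
  have "regvec v K i $ r = (\<Prod>k\<in>Tset v K r. hf v (Tset v K r) (gm v K r) k (i ! k))"
    unfolding regvec_entry(1)[OF assms] by (intro prod.cong refl) (simp add: hf_def)
  also have "\<dots> = (\<Prod>k\<in>{..<K}. hf v (Tset v K r) (gm v K r) k (i ! k))"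
    by (rule prod.mono_neutral_left) (auto simp: hf_def Tset_sub[OF assms])
  finally show ?thesis .
qed


definition Xv :: "nat \<Rightarrow> nat \<Rightarrow> nat \<Rightarrow> nat list \<times> nat list \<Rightarrow> real" where
  "Xv v K r x = regvec v K (fst x) $ r - regvec v K (snd x) $ r"

lemma prod_if_sub: "finite I \<Longrightarrow> T \<subseteq> I \<Longrightarrow> (\<Prod>k\<in>I. if k \<in> T then f k else 1) = (\<Prod>k\<in>T. f k)"
  by (simp add: prod.If_cases Int_absorb1)

lemma hf_zero: "\<forall>k\<in>T. g k < v - 1 \<Longrightarrow> hf v T g k 0 = (if k \<in> T then 0 else 1)"
  by (simp add: hf_def f1_def)

lemma sum_hf: assumes "\<forall>k\<in>T. g k < v - 1"
  shows "(\<Sum>a\<in>{1..v}. hf v T g k a) = (if k \<in> T then 0 else real v)"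
  using assms sum_f1 by (simp add: hf_def)

lemma sum_hfhf: assumes "\<forall>k\<in>T. g k < v - 1" "\<forall>k\<in>T'. g' k < v - 1"
  shows "(\<Sum>a\<in>{1..v}. hf v T g k a * hf v T' g' k a) = (if k \<in> T \<and> k \<in> T' then (if g k = g' k then 2 else 1)
     else if k \<in> T \<or> k \<in> T' then 0 else real v)"
  using assms sum_f1 sum_f1f1 by (simp add: hf_def sum_distrib_left[symmetric] sum_distrib_right[symmetric])

lemma sum_z_XX:
  assumes v: "v \<ge> 2" and r: "r < nparams v K" and c: "c < nparams v K" and ad: "(A,D) \<in> AD K S d"
  shows "(\<Sum>z\<in>PiE {..<K} (Zs v A D). Xv v K r (enc K z) * Xv v K c (enc K z)) =
    (if Tset v K r = Tset v K c \<and> Tset v K r \<subseteq> A then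
       2 * (\<Prod>k\<in>Tset v K r. Qf v (gm v K r k) (gm v K c k)) *
         (1 - (\<Prod>k\<in>Tset v K r. if k \<in> D then -1 / (real v - 1) else 1)) * (\<Prod>k\<in>{..<K}. cnt v A D k)
     else 0)"
proof -
  define Tr where "Tr = Tset v K r"
  define Tc where "Tc = Tset v K c"
  define hr where "hr = hf v Tr (gm v K r)"
  define hc where "hc = hf v Tc (gm v K c)"
  have gr: "\<forall>k\<in>Tr. gm v K r k < v - 1" using regvec_entry(2)[OF r v] by (simp add: Tr_def)
  have gc: "\<forall>k\<in>Tc. gm v K c k < v - 1" using regvec_entry(2)[OF c v] by (simp add: Tc_def)
  have TrK: "Tr \<subseteq> {..<K}" using Tset_sub[OF r v] by (simp add: Tr_def)
  have TcK: "Tc \<subseteq> {..<K}" using Tset_sub[OF c v] by (simp add: Tc_def)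
  have Fr: "regvec v K (fst (enc K z)) $ r = (\<Prod>k\<in>{..<K}. hr k (fst (z k)))"
     "regvec v K (snd (enc K z)) $ r = (\<Prod>k\<in>{..<K}. hr k (snd (z k)))" for z
    unfolding F_prod[OF r v] hr_def Tr_def by (auto intro!: prod.cong simp: enc_nth)
  have Fc: "regvec v K (fst (enc K z)) $ c = (\<Prod>k\<in>{..<K}. hc k (fst (z k)))"
     "regvec v K (snd (enc K z)) $ c = (\<Prod>k\<in>{..<K}. hc k (snd (z k)))" for z
    unfolding F_prod[OF c v] hc_def Tc_def by (auto intro!: prod.cong simp: enc_nth)
  define L where "L = (\<lambda>s1 s2. \<Prod>k\<in>{..<K}. \<Sum>y\<in>Zs v A D k. hr k (s1 y) * hc k (s2 y))"
  have SL: "(\<Sum>z\<in>PiE {..<K} (Zs v A D). (\<Prod>k\<in>{..<K}. hr k (s1 (z k))) * (\<Prod>k\<in>{..<K}. hc k (s2 (z k)))) = L s1 s2"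
    for s1 s2
    unfolding L_def prod.distrib[symmetric]
    by (subst prod_sum_PiE) (auto simp: finite_Zs)
  have XX: "Xv v K r (enc K z) * Xv v K c (enc K z) =
     (\<Prod>k\<in>{..<K}. hr k (fst (z k))) * (\<Prod>k\<in>{..<K}. hc k (fst (z k)))
   - (\<Prod>k\<in>{..<K}. hr k (fst (z k))) * (\<Prod>k\<in>{..<K}. hc k (snd (z k)))
   - (\<Prod>k\<in>{..<K}. hr k (snd (z k))) * (\<Prod>k\<in>{..<K}. hc k (fst (z k)))
   + (\<Prod>k\<in>{..<K}. hr k (snd (z k))) * (\<Prod>k\<in>{..<K}. hc k (snd (z k)))" for z
    unfolding Xv_def Fr Fc by (simp add: algebra_simps)
  have tot: "(\<Sum>z\<in>PiE {..<K} (Zs v A D). Xv v K r (enc K z) * Xv v K c (enc K z)) =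
       L fst fst - L fst snd - L snd fst + L snd snd"
    unfolding XX by (simp add: sum.distrib sum_subtractf SL)
  have Lss: "L snd snd = L fst fst" unfolding L_def by (simp add: Zsum_ss Zsum_ff)
  have Lsf: "L snd fst = L fst snd" unfolding L_def by (simp add: Zsum_sf Zsum_fs)
  have SP: "(\<Sum>a\<in>{1..v}. hr k a) = (if k \<in> Tr then 0 else real v)" for k
    unfolding hr_def by (rule sum_hf[OF gr])
  have SQ: "(\<Sum>a\<in>{1..v}. hc k a) = (if k \<in> Tc then 0 else real v)" for k
    unfolding hc_def by (rule sum_hf[OF gc])
  have SPQ: "(\<Sum>a\<in>{1..v}. hr k a * hc k a) = (if k \<in> Tr \<and> k \<in> Tc then (if gm v K r k = gm v K c k then 2 else 1)
     else if k \<in> Tr \<or> k \<in> Tc then 0 else real v)" for k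
    unfolding hr_def hc_def by (rule sum_hfhf[OF gr gc])
  have h0: "hr k 0 = (if k \<in> Tr then 0 else 1)" "hc k 0 = (if k \<in> Tc then 0 else 1)" for k
    unfolding hr_def hc_def by (simp_all add: hf_zero[OF gr] hf_zero[OF gc])
  have Lff_k: "(\<Sum>y\<in>Zs v A D k. hr k (fst y) * hc k (fst y)) =
     (if k \<in> A then (if k \<in> D then (real v - 1) * (\<Sum>a\<in>{1..v}. hr k a * hc k a) else (\<Sum>a\<in>{1..v}. hr k a * hc k a))
      else hr k 0 * hc k 0)" for k by (rule Zsum_ff)
  have Lfs_k: "(\<Sum>y\<in>Zs v A D k. hr k (fst y) * hc k (snd y)) =
     (if k \<in> A then (if k \<in> D then (\<Sum>a\<in>{1..v}. hr k a) * (\<Sum>a\<in>{1..v}. hc k a) - (\<Sum>a\<in>{1..v}. hr k a * hc k a)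
      else (\<Sum>a\<in>{1..v}. hr k a * hc k a)) else hr k 0 * hc k 0)" for k by (rule Zsum_fs)
  show ?thesis
  proof (cases "Tr = Tc \<and> Tr \<subseteq> A")
    case False
    then obtain k where k: "k < K" "(k \<in> Tr \<and> k \<notin> Tc) \<or> (k \<in> Tc \<and> k \<notin> Tr) \<or> (k \<in> Tr \<and> k \<notin> A)"
      using TrK TcK by blast
    have z1: "(\<Sum>y\<in>Zs v A D k. hr k (fst y) * hc k (fst y)) = 0"
      unfolding Lff_k SPQ h0 using k by auto
    have z2: "(\<Sum>y\<in>Zs v A D k. hr k (fst y) * hc k (snd y)) = 0"
      unfolding Lfs_k SP SQ SPQ h0 using k by auto
    have "L fst fst = 0" "L fst snd = 0" unfolding L_def using z1 z2 k
      by (auto intro!: prod_zero)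
    thus ?thesis using False tot Lss Lsf by (auto simp: Tr_def Tc_def)
  next
    case True
    hence T: "Tc = Tr" "Tr \<subseteq> A" by auto
    have vv: "real v - 1 \<noteq> 0" using v by simp
    have e1: "(\<Sum>y\<in>Zs v A D k. hr k (fst y) * hc k (fst y)) =
        (if k \<in> Tr then Qf v (gm v K r k) (gm v K c k) else 1) * cnt v A D k" if "k < K" for k
      unfolding Lff_k SPQ h0 using T v by (auto simp: Qf_def cnt_def)
    have e2: "(\<Sum>y\<in>Zs v A D k. hr k (fst y) * hc k (snd y)) =
        (if k \<in> Tr then Qf v (gm v K r k) (gm v K c k) * (if k \<in> D then -1 / (real v - 1) else 1) else 1)
          * cnt v A D k" if "k < K" for k
      unfolding Lfs_k SP SQ SPQ h0 using T v vv by (auto simp: Qf_def cnt_def field_simps)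
    have "L fst fst = (\<Prod>k\<in>{..<K}. (if k \<in> Tr then Qf v (gm v K r k) (gm v K c k) else 1) * cnt v A D k)"
      unfolding L_def using e1 by (intro prod.cong) auto
    also have "\<dots> = (\<Prod>k\<in>{..<K}. (if k \<in> Tr then Qf v (gm v K r k) (gm v K c k) else 1)) * (\<Prod>k\<in>{..<K}. cnt v A D k)"
      by (rule prod.distrib)
    also have "(\<Prod>k\<in>{..<K}. (if k \<in> Tr then Qf v (gm v K r k) (gm v K c k) else 1)) = (\<Prod>k\<in>Tr. Qf v (gm v K r k) (gm v K c k))"
      by (rule prod_if_sub[OF _ TrK]) simp
    finally have LL1: "L fst fst = (\<Prod>k\<in>Tr. Qf v (gm v K r k) (gm v K c k)) * (\<Prod>k\<in>{..<K}. cnt v A D k)" .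
    have "L fst snd = (\<Prod>k\<in>{..<K}. (if k \<in> Tr then Qf v (gm v K r k) (gm v K c k) * (if k \<in> D then -1 / (real v - 1) else 1) else 1) * cnt v A D k)"
      unfolding L_def using e2 by (intro prod.cong) auto
    also have "\<dots> = (\<Prod>k\<in>{..<K}. (if k \<in> Tr then Qf v (gm v K r k) (gm v K c k) * (if k \<in> D then -1 / (real v - 1) else 1) else 1)) * (\<Prod>k\<in>{..<K}. cnt v A D k)"
      by (rule prod.distrib)
    also have "(\<Prod>k\<in>{..<K}. (if k \<in> Tr then Qf v (gm v K r k) (gm v K c k) * (if k \<in> D then -1 / (real v - 1) else 1) else 1))
       = (\<Prod>k\<in>Tr. Qf v (gm v K r k) (gm v K c k) * (if k \<in> D then -1 / (real v - 1) else 1))"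
      by (rule prod_if_sub[OF _ TrK]) simp
    finally have "L fst snd = (\<Prod>k\<in>Tr. Qf v (gm v K r k) (gm v K c k)) *
        (\<Prod>k\<in>Tr. if k \<in> D then -1 / (real v - 1) else 1) * (\<Prod>k\<in>{..<K}. cnt v A D k)"
      by (simp add: prod.distrib)
    note LL2 = this
    have cond: "Tset v K r = Tset v K c \<and> Tset v K r \<subseteq> A" using True unfolding Tr_def Tc_def by blast
    have "L fst fst - L fst snd - L snd fst + L snd snd =
      2 * (\<Prod>k\<in>Tr. Qf v (gm v K r k) (gm v K c k)) *
         (1 - (\<Prod>k\<in>Tr. if k \<in> D then -1 / (real v - 1) else 1)) * (\<Prod>k\<in>{..<K}. cnt v A D k)"
      unfolding Lss Lsf LL1 LL2 by (simp add: algebra_simps)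
    thus ?thesis unfolding tot if_P[OF cond] by (simp only: Tr_def)
  qed
qed




lemma prod_cnt: assumes "(A,D) \<in> AD K S d"
  shows "(\<Prod>k\<in>{..<K}. cnt v A D k) = real v ^ S * (real v - 1) ^ d"
proof -
  have A: "A \<subseteq> {..<K}" "card A = S" "D \<subseteq> A" "card D = d" using assms by (auto simp: AD_def)
  have fA: "finite A" using A(1) finite_subset by blast
  have "(\<Prod>k\<in>{..<K}. cnt v A D k) = (\<Prod>k\<in>A. cnt v A D k)"
    by (rule prod.mono_neutral_right) (use A in \<open>auto simp: cnt_def\<close>)
  also have "\<dots> = (\<Prod>k\<in>A. real v * (if k \<in> D then real v - 1 else 1))"
    by (intro prod.cong refl) (simp add: cnt_def)
  also have "\<dots> = real v ^ S * (\<Prod>k\<in>A. if k \<in> D then real v - 1 else 1)"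
    by (simp add: prod.distrib A)
  also have "(\<Prod>k\<in>A. if k \<in> D then real v - 1 else 1) = (real v - 1) ^ d"
    using fA A by (simp add: prod.If_cases Int_absorb1)
  finally show ?thesis .
qed

definition kap :: "nat \<Rightarrow> nat \<Rightarrow> nat \<Rightarrow> nat set \<Rightarrow> nat \<Rightarrow> real" where
  "kap v K S T d = 2 * (\<Sum>ad\<in>{ad\<in>AD K S d. T \<subseteq> fst ad}.
        1 - (\<Prod>k\<in>T. if k \<in> snd ad then -1 / (real v - 1) else 1)) / real (card (AD K S d))"

definition Bm :: "nat \<Rightarrow> nat \<Rightarrow> nat \<Rightarrow> nat \<Rightarrow> real" where
  "Bm v K r c = (if Tset v K r = Tset v K c then (\<Prod>k\<in>Tset v K r. Qf v (gm v K r k) (gm v K c k)) else 0)"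

lemma card_region: assumes "v \<ge> 2"
  shows "real (card (depth_region v K S d)) = real (card (AD K S d)) * (real v ^ S * (real v - 1) ^ d)"
proof -
  have "real (card (depth_region v K S d)) = (\<Sum>x\<in>depth_region v K S d. 1)" by (rule real_of_card)
  also have "\<dots> = (\<Sum>ad\<in>AD K S d. \<Sum>z\<in>PiE {..<K} (Zs v (fst ad) (snd ad)). 1)" by (rule sum_region)
  also have "\<dots> = (\<Sum>ad\<in>AD K S d. real v ^ S * (real v - 1) ^ d)"
  proof (intro sum.cong refl)
    fix ad assume ad: "ad \<in> AD K S d"
    have "(\<Sum>z\<in>PiE {..<K} (Zs v (fst ad) (snd ad)). (1::real)) = real (card (PiE {..<K} (Zs v (fst ad) (snd ad))))"
      by simp
    also have "\<dots> = (\<Prod>k\<in>{..<K}. real (card (Zs v (fst ad) (snd ad) k)))" by (simp add: card_PiE)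
    also have "\<dots> = (\<Prod>k\<in>{..<K}. cnt v (fst ad) (snd ad) k)" using card_Zs[OF assms] by simp
    also have "\<dots> = real v ^ S * (real v - 1) ^ d" using prod_cnt[of "fst ad" "snd ad"] ad by simp
    finally show "(\<Sum>z\<in>PiE {..<K} (Zs v (fst ad) (snd ad)). (1::real)) = real v ^ S * (real v - 1) ^ d" .
  qed
  also have "\<dots> = real (card (AD K S d)) * (real v ^ S * (real v - 1) ^ d)" by simp
  finally show ?thesis .
qed

lemma avg_XX: assumes v: "v \<ge> 2" and r: "r < nparams v K" and c: "c < nparams v K"
  shows "(\<Sum>x\<in>depth_region v K S d. Xv v K r x * Xv v K c x) / real (card (depth_region v K S d)) =
     kap v K S (Tset v K r) d * Bm v K r c"
proof -
  define C where "C = real v ^ S * (real v - 1) ^ d"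
  define T where "T = Tset v K r"
  have Cp: "C > 0" using v by (simp add: C_def)
  have "(\<Sum>x\<in>depth_region v K S d. Xv v K r x * Xv v K c x) =
     (\<Sum>ad\<in>AD K S d. \<Sum>z\<in>PiE {..<K} (Zs v (fst ad) (snd ad)). Xv v K r (enc K z) * Xv v K c (enc K z))"
    by (rule sum_region)
  also have "\<dots> = (\<Sum>ad\<in>AD K S d. if Tset v K r = Tset v K c \<and> Tset v K r \<subseteq> fst ad then
       2 * (\<Prod>k\<in>Tset v K r. Qf v (gm v K r k) (gm v K c k)) *
         (1 - (\<Prod>k\<in>Tset v K r. if k \<in> snd ad then -1 / (real v - 1) else 1)) * C else 0)"
  proof (intro sum.cong refl)
    fix ad assume ad: "ad \<in> AD K S d"
    obtain A D where AD: "ad = (A,D)" by fastforce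
    show "(\<Sum>z\<in>PiE {..<K} (Zs v (fst ad) (snd ad)). Xv v K r (enc K z) * Xv v K c (enc K z)) = (if Tset v K r = Tset v K c \<and> Tset v K r \<subseteq> fst ad then
       2 * (\<Prod>k\<in>Tset v K r. Qf v (gm v K r k) (gm v K c k)) *
         (1 - (\<Prod>k\<in>Tset v K r. if k \<in> snd ad then -1 / (real v - 1) else 1)) * C else 0)"
    proof -
      have ad': "(A,D) \<in> AD K S d" using ad AD by simp
      show ?thesis unfolding AD fst_conv snd_conv sum_z_XX[OF v r c ad'] prod_cnt[OF ad'] C_def by (rule refl)
    qed
  qed
  also have "\<dots> = (if Tset v K r = Tset v K c then 2 * (\<Prod>k\<in>T. Qf v (gm v K r k) (gm v K c k)) * C *
      (\<Sum>ad\<in>{ad\<in>AD K S d. T \<subseteq> fst ad}. 1 - (\<Prod>k\<in>T. if k \<in> snd ad then -1 / (real v - 1) else 1)) else 0)"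
    unfolding T_def
    by (auto simp: sum.inter_filter[symmetric] finite_AD sum_distrib_left intro!: sum.cong)
  finally have "(\<Sum>x\<in>depth_region v K S d. Xv v K r x * Xv v K c x) = \<dots>" .
  thus ?thesis unfolding card_region[OF v] kap_def Bm_def T_def[symmetric] C_def[symmetric]
    using Cp by (auto simp: field_simps)
qed




definition xiw :: "nat \<Rightarrow> nat \<Rightarrow> nat \<Rightarrow> (nat \<Rightarrow> real) \<Rightarrow> nat list \<times> nat list \<Rightarrow> real" where
  "xiw v K S w = (\<lambda>x. \<Sum>d=1..S. w d * uniform_depth_design v K S d x)"

definition mu :: "nat \<Rightarrow> nat \<Rightarrow> nat \<Rightarrow> (nat \<Rightarrow> real) \<Rightarrow> nat set \<Rightarrow> real" where
  "mu v K S w T = (\<Sum>d=1..S. w d * kap v K S T d)"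

lemma finite_profiles: "finite (profiles v K)"
proof -
  have "profiles v K = {xs. set xs \<subseteq> {0..v} \<and> length xs = K}" by (auto simp: profiles_def)
  thus ?thesis by (simp add: finite_lists_length_eq)
qed

lemma finite_region: "finite (design_region v K S)"
proof -
  have "design_region v K S \<subseteq> profiles v K \<times> profiles v K" by (auto simp: design_region_def)
  thus ?thesis using finite_profiles by (meson finite_SigmaI finite_subset)
qed

lemma depth_sub: "depth_region v K S d \<subseteq> design_region v K S"
  by (auto simp: depth_region_def)

lemma Xv_info: assumes "r < nparams v K"
  shows "(regvec v K (fst x) - regvec v K (snd x)) $ r = Xv v K r x"
  using assms by (simp add: Xv_def dim_regvec)

lemma uniform_sum: "(\<Sum>x\<in>design_region v K S. uniform_depth_design v K S d x * g x) =
   (\<Sum>x\<in>depth_region v K S d. g x) / real (card (depth_region v K S d))"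
proof -
  have "(\<Sum>x\<in>design_region v K S. uniform_depth_design v K S d x * g x) =
      (\<Sum>x\<in>depth_region v K S d. uniform_depth_design v K S d x * g x)"
    by (rule sum.mono_neutral_right[OF finite_region depth_sub]) (auto simp: uniform_depth_design_def)
  also have "\<dots> = (\<Sum>x\<in>depth_region v K S d. g x / real (card (depth_region v K S d)))"
    by (intro sum.cong refl) (simp add: uniform_depth_design_def)
  finally show ?thesis by (simp add: sum_divide_distrib)
qed

lemma info_w: assumes v: "v \<ge> 2"
  shows "info_matrix v K S (xiw v K S w) =
     mat (nparams v K) (nparams v K) (\<lambda>(r,c). mu v K S w (Tset v K r) * Bm v K r c)"
proof (rule eq_matI)
  fix r c assume r: "r < dim_row (mat (nparams v K) (nparams v K) (\<lambda>(r,c). mu v K S w (Tset v K r) * Bm v K r c))"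
    and c: "c < dim_col (mat (nparams v K) (nparams v K) (\<lambda>(r,c). mu v K S w (Tset v K r) * Bm v K r c))"
  hence r: "r < nparams v K" and c: "c < nparams v K" by auto
  have "info_matrix v K S (xiw v K S w) $$ (r,c) =
     (\<Sum>x\<in>design_region v K S. (\<Sum>d=1..S. w d * uniform_depth_design v K S d x) * Xv v K r x * Xv v K c x)"
    using r c by (simp add: info_matrix_def xiw_def Xv_info)
  also have "\<dots> = (\<Sum>d=1..S. w d * (\<Sum>x\<in>design_region v K S. uniform_depth_design v K S d x * (Xv v K r x * Xv v K c x)))"
    by (simp add: sum_distrib_left sum_distrib_right algebra_simps, rule sum.swap)
  also have "\<dots> = (\<Sum>d=1..S. w d * (kap v K S (Tset v K r) d * Bm v K r c))"
    unfolding uniform_sum avg_XX[OF v r c] ..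
  also have "\<dots> = mu v K S w (Tset v K r) * Bm v K r c"
    by (simp add: mu_def sum_distrib_right sum_distrib_left algebra_simps)
  finally show "info_matrix v K S (xiw v K S w) $$ (r,c) =
    mat (nparams v K) (nparams v K) (\<lambda>(r,c). mu v K S w (Tset v K r) * Bm v K r c) $$ (r,c)"
    using r c by simp
qed (auto simp: info_matrix_def)

definition Bmat :: "nat \<Rightarrow> nat \<Rightarrow> real mat" where
  "Bmat v K = mat (nparams v K) (nparams v K) (\<lambda>(r,c). Bm v K r c)"

lemma det_w: assumes v: "v \<ge> 2"
  shows "det (info_matrix v K S (xiw v K S w)) = (\<Prod>r<nparams v K. mu v K S w (Tset v K r)) * det (Bmat v K)"
proof -
  let ?p = "nparams v K"
  define Dg where "Dg = mat ?p ?p (\<lambda>(r,c). if r = c then mu v K S w (Tset v K r) else 0)"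
  have eq: "info_matrix v K S (xiw v K S w) = Dg * Bmat v K"
    unfolding info_w[OF v] Dg_def Bmat_def
  proof (rule eq_matI)
    fix r c assume "r < dim_row (mat ?p ?p (\<lambda>(r, c). if r = c then mu v K S w (Tset v K r) else 0) * mat ?p ?p (\<lambda>(r,c). Bm v K r c))"
      "c < dim_col (mat ?p ?p (\<lambda>(r, c). if r = c then mu v K S w (Tset v K r) else 0) * mat ?p ?p (\<lambda>(r,c). Bm v K r c))"
    hence rc: "r < ?p" "c < ?p" by auto
    have "(mat ?p ?p (\<lambda>(r, c). if r = c then mu v K S w (Tset v K r) else 0) * mat ?p ?p (\<lambda>(r,c). Bm v K r c)) $$ (r,c)
       = (\<Sum>k\<in>{0..<?p}. (if r = k then mu v K S w (Tset v K r) else 0) * Bm v K k c)"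
      using rc by (simp add: scalar_prod_def)
    also have "\<dots> = mu v K S w (Tset v K r) * Bm v K r c"
      using rc by (simp add: if_distrib[of "\<lambda>a. a * _"] sum.delta cong: if_cong)
    finally show "mat ?p ?p (\<lambda>(r,c). mu v K S w (Tset v K r) * Bm v K r c) $$ (r,c) =
      (mat ?p ?p (\<lambda>(r, c). if r = c then mu v K S w (Tset v K r) else 0) * mat ?p ?p (\<lambda>(r,c). Bm v K r c)) $$ (r,c)"
      using rc by simp
  qed auto
  have "det Dg = (\<Prod>r = 0..<?p. mu v K S w (Tset v K r))"
    by (subst det_upper_triangular[of _ ?p]) (auto simp: Dg_def prod_list_diag_prod intro!: prod.cong)
  moreover have "det (Dg * Bmat v K) = det Dg * det (Bmat v K)"
    by (rule det_mult) (auto simp: Dg_def Bmat_def)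
  ultimately show ?thesis unfolding eq by (simp add: atLeast0LessThan)
qed




definition ff :: "real \<Rightarrow> nat \<Rightarrow> real" where "ff x u = (\<Prod>i<u. x - real i)"

lemma ff_Suc: "ff x (Suc u) = ff x u * (x - real u)" by (simp add: ff_def)

lemma ff_zero_lt: "d < u \<Longrightarrow> ff (real d) u = 0"
  unfolding ff_def by (intro prod_zero) (auto intro!: bexI[of _ d])

lemma ff_pos: "u \<le> S \<Longrightarrow> ff (real S) u > 0"
  unfolding ff_def by (rule prod_pos) auto

lemma binom_ff: "u \<le> d \<Longrightarrow> d \<le> S \<Longrightarrow> real ((S - u) choose (d - u)) * ff (real S) u = real (S choose d) * ff (real d) u"
proof (induction u)
  case 0 thus ?case by (simp add: ff_def)
next
  case (Suc u)
  have IH: "real ((S - u) choose (d - u)) * ff (real S) u = real (S choose d) * ff (real d) u"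
    using Suc by simp
  obtain m where m: "S - u = Suc m" using Suc.prems by (metis Suc_diff_Suc le_less_trans lessI less_le_trans)
  obtain j where j: "d - u = Suc j" using Suc.prems by (metis Suc_diff_le Suc_le_lessD diff_Suc_Suc)
  have m2: "S - Suc u = m" "d - Suc u = j" using m j by auto
  have Sm: "S = u + Suc m" "d = u + Suc j" using m j Suc.prems by arith+
  have key: "real (Suc m) * real (m choose j) = real (Suc m choose Suc j) * real (Suc j)"
    using Suc_times_binomial_eq[of m j] by (metis of_nat_mult)
  have "real ((S - Suc u) choose (d - Suc u)) * ff (real S) (Suc u)
      = real (m choose j) * (real (Suc m)) * ff (real S) u"
    using Sm by (simp add: m2 ff_Suc)
  also have "\<dots> = real ((S - u) choose (d - u)) * real (Suc j) * ff (real S) u"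
    using key m j by (simp add: algebra_simps)
  also have "\<dots> = real (S choose d) * ff (real d) u * real (Suc j)" using IH by (simp add: algebra_simps)
  also have "\<dots> = real (S choose d) * ff (real d) (Suc u)"
    using Sm by (simp add: ff_Suc)
  finally show ?case .
qed

lemma card_supsets: assumes "finite A" "U \<subseteq> A"
  shows "card {D. D \<subseteq> A \<and> card D = d \<and> U \<subseteq> D} = (if card U \<le> d then (card A - card U) choose (d - card U) else 0)"
proof (cases "card U \<le> d")
  case False
  have e: "{D. D \<subseteq> A \<and> card D = d \<and> U \<subseteq> D} = {}"
  proof (rule ccontr)
    assume "{D. D \<subseteq> A \<and> card D = d \<and> U \<subseteq> D} \<noteq> {}"
    then obtain D where "D \<subseteq> A" "card D = d" "U \<subseteq> D" by blast
    hence "card U \<le> d" using assms card_mono[of D U] finite_subset by blast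
    thus False using False by simp
  qed
  show ?thesis unfolding e using False by simp
next
  case True
  have fU: "finite U" using assms finite_subset by blast
  have bij: "bij_betw (\<lambda>E. E \<union> U) {E. E \<subseteq> A - U \<and> card E = d - card U} {D. D \<subseteq> A \<and> card D = d \<and> U \<subseteq> D}"
  proof (rule bij_betwI[where g="\<lambda>D. D - U"])
    show "(\<lambda>E. E \<union> U) \<in> {E. E \<subseteq> A - U \<and> card E = d - card U} \<rightarrow> {D. D \<subseteq> A \<and> card D = d \<and> U \<subseteq> D}"
    proof
      fix E assume E: "E \<in> {E. E \<subseteq> A - U \<and> card E = d - card U}"
      have fE: "finite E" using E assms finite_subset by blast
      have "card (E \<union> U) = card E + card U" using E fE fU by (subst card_Un_disjoint) auto
      thus "E \<union> U \<in> {D. D \<subseteq> A \<and> card D = d \<and> U \<subseteq> D}" using E assms True by auto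
    qed
    show "(\<lambda>D. D - U) \<in> {D. D \<subseteq> A \<and> card D = d \<and> U \<subseteq> D} \<rightarrow> {E. E \<subseteq> A - U \<and> card E = d - card U}"
    proof
      fix D assume D: "D \<in> {D. D \<subseteq> A \<and> card D = d \<and> U \<subseteq> D}"
      have "finite D" using D assms finite_subset by blast
      thus "D - U \<in> {E. E \<subseteq> A - U \<and> card E = d - card U}" using D by (auto simp: card_Diff_subset fU)
    qed
  qed auto
  have "card {D. D \<subseteq> A \<and> card D = d \<and> U \<subseteq> D} = card {E. E \<subseteq> A - U \<and> card E = d - card U}"
    using bij_betw_same_card[OF bij] by simp
  also have "\<dots> = card (A - U) choose (d - card U)" using assms by (simp add: n_subsets)
  finally show ?thesis using True assms by (simp add: card_Diff_subset fU)
qed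

definition pol :: "nat \<Rightarrow> nat \<Rightarrow> nat set \<Rightarrow> real \<Rightarrow> real" where
  "pol v S T x = - (\<Sum>U\<in>Pow T - {{}}. (-1 / (real v - 1) - 1) ^ card U * ff x (card U) / ff (real S) (card U))"

lemma prod_expand: assumes "finite T"
  shows "(\<Prod>k\<in>T. if k \<in> D then q else 1) = (\<Sum>U\<in>Pow T. if U \<subseteq> D then (q - 1) ^ card U else (0::real))"
proof -
  have "(\<Prod>k\<in>T. if k \<in> D then q else 1) = (\<Prod>k\<in>T. (if k \<in> D then q - 1 else 0) + 1)"
    by (intro prod.cong refl) auto
  also have "\<dots> = (\<Sum>U\<in>Pow T. (\<Prod>k\<in>U. if k \<in> D then q - 1 else 0) * (\<Prod>k\<in>T - U. 1))"
    by (rule prod_add[OF assms])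
  also have "\<dots> = (\<Sum>U\<in>Pow T. if U \<subseteq> D then (q - 1) ^ card U else 0)"
  proof (intro sum.cong refl)
    fix U assume "U \<in> Pow T"
    show "(\<Prod>k\<in>U. if k \<in> D then q - 1 else 0) * (\<Prod>k\<in>T - U. 1) = (if U \<subseteq> D then (q - 1) ^ card U else 0)"
    proof (cases "U \<subseteq> D")
      case True thus ?thesis by (simp add: subset_iff)
    next
      case False then obtain k where "k \<in> U" "k \<notin> D" by blast
      moreover have "finite U" using \<open>U \<in> Pow T\<close> assms finite_subset by blast
      ultimately show ?thesis using False by (auto intro: prod_zero)
    qed
  qed
  finally show ?thesis .
qed

lemma inner_sum: assumes "finite A" "card A = S" "T \<subseteq> A" "d \<le> S"
  shows "(\<Sum>D\<in>{D. D \<subseteq> A \<and> card D = d}. 1 - (\<Prod>k\<in>T. if k \<in> D then -1 / (real v - 1) else 1))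
     = real (S choose d) * pol v S T (real d)"
proof -
  define q where "q = -1 / (real v - 1)"
  define DD where "DD = {D. D \<subseteq> A \<and> card D = d}"
  have fT: "finite T" using assms finite_subset by blast
  have fDD: "finite DD" unfolding DD_def using assms(1) by simp
  have cDD: "card DD = S choose d" unfolding DD_def using assms by (simp add: n_subsets)
  have N: "(\<Sum>D\<in>DD. if U \<subseteq> D then (1::real) else 0) = real (S choose d) * ff (real d) (card U) / ff (real S) (card U)"
    if U: "U \<subseteq> T" for U
  proof -
    have UA: "U \<subseteq> A" using U assms by auto
    have fU: "finite U" using UA assms finite_subset by blast
    have cU: "card U \<le> S" using card_mono[OF assms(1) UA] assms by simp
    have "(\<Sum>D\<in>DD. if U \<subseteq> D then (1::real) else 0) = real (card {D\<in>DD. U \<subseteq> D})"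
      using fDD by (simp add: sum.If_cases Int_def)
    also have "{D\<in>DD. U \<subseteq> D} = {D. D \<subseteq> A \<and> card D = d \<and> U \<subseteq> D}" by (auto simp: DD_def)
    also have "card \<dots> = (if card U \<le> d then (S - card U) choose (d - card U) else 0)"
      using card_supsets[OF assms(1) UA] assms by simp
    also have "real \<dots> = real (S choose d) * ff (real d) (card U) / ff (real S) (card U)"
    proof (cases "card U \<le> d")
      case True
      have "ff (real S) (card U) > 0" using ff_pos[OF cU] .
      thus ?thesis using binom_ff[OF True assms(4)] True by (simp add: field_simps)
    next
      case False thus ?thesis using ff_zero_lt[of d "card U"] by simp
    qed
    finally show ?thesis .
  qed
  have "(\<Sum>D\<in>DD. 1 - (\<Prod>k\<in>T. if k \<in> D then q else 1))
      = real (card DD) - (\<Sum>D\<in>DD. \<Sum>U\<in>Pow T. if U \<subseteq> D then (q - 1) ^ card U else 0)"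
    by (simp add: sum_subtractf prod_expand[OF fT])
  also have "(\<Sum>D\<in>DD. \<Sum>U\<in>Pow T. if U \<subseteq> D then (q - 1) ^ card U else 0)
      = (\<Sum>U\<in>Pow T. (q - 1) ^ card U * (\<Sum>D\<in>DD. if U \<subseteq> D then 1 else 0))"
    by (subst sum.swap) (simp add: sum_distrib_left if_distrib cong: if_cong)
  also have "\<dots> = (\<Sum>U\<in>Pow T. (q - 1) ^ card U * (real (S choose d) * ff (real d) (card U) / ff (real S) (card U)))"
    by (intro sum.cong refl) (simp add: N)
  also have "\<dots> = real (S choose d) + (\<Sum>U\<in>Pow T - {{}}. (q - 1) ^ card U * (real (S choose d) * ff (real d) (card U) / ff (real S) (card U)))"
    using fT by (subst sum.remove[of _ "{}"]) (auto simp: ff_def)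
  finally show ?thesis unfolding DD_def[symmetric] q_def[symmetric] pol_def cDD
    by (simp add: sum_distrib_left algebra_simps)
qed


definition AA :: "nat \<Rightarrow> nat \<Rightarrow> nat set set" where
  "AA K S = {A. A \<subseteq> {..<K} \<and> card A = S}"

lemma finite_AA: "finite (AA K S)"
  by (rule finite_subset[of _ "Pow {..<K}"]) (auto simp: AA_def)

lemma AD_Sigma: "AD K S d = Sigma (AA K S) (\<lambda>A. {D. D \<subseteq> A \<and> card D = d})"
  by (auto simp: AD_def AA_def)

lemma ADT_Sigma: "{ad\<in>AD K S d. T \<subseteq> fst ad} = Sigma {A\<in>AA K S. T \<subseteq> A} (\<lambda>A. {D. D \<subseteq> A \<and> card D = d})"
  by (auto simp: AD_def AA_def)

lemma kap_eq: assumes "d \<le> S"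
  shows "kap v K S T d = 2 * real (card {A\<in>AA K S. T \<subseteq> A}) / real (card (AA K S)) * pol v S T (real d)"
proof -
  have fin: "finite A" if "A \<in> AA K S" for A using that finite_subset[of A "{..<K}"] by (auto simp: AA_def)
  have "(\<Sum>ad\<in>{ad\<in>AD K S d. T \<subseteq> fst ad}. 1 - (\<Prod>k\<in>T. if k \<in> snd ad then -1 / (real v - 1) else 1))
     = (\<Sum>A\<in>{A\<in>AA K S. T \<subseteq> A}. \<Sum>D\<in>{D. D \<subseteq> A \<and> card D = d}. 1 - (\<Prod>k\<in>T. if k \<in> D then -1 / (real v - 1) else 1))"
    unfolding ADT_Sigma by (subst sum.Sigma) (auto simp: finite_AA fin split_def)
  also have "\<dots> = (\<Sum>A\<in>{A\<in>AA K S. T \<subseteq> A}. real (S choose d) * pol v S T (real d))"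
  proof (rule sum.cong[OF refl])
    fix A assume A: "A \<in> {A\<in>AA K S. T \<subseteq> A}"
    have fA: "finite A" using fin A by simp
    have "card A = S" "T \<subseteq> A" using A by (auto simp: AA_def)
    thus "(\<Sum>D\<in>{D. D \<subseteq> A \<and> card D = d}. 1 - (\<Prod>k\<in>T. if k \<in> D then -1 / (real v - 1) else 1)) =
      real (S choose d) * pol v S T (real d)" by (rule inner_sum[OF fA _ _ assms])
  qed
  also have "\<dots> = real (card {A\<in>AA K S. T \<subseteq> A}) * real (S choose d) * pol v S T (real d)" by simp
  finally have num: "(\<Sum>ad\<in>{ad\<in>AD K S d. T \<subseteq> fst ad}. 1 - (\<Prod>k\<in>T. if k \<in> snd ad then -1 / (real v - 1) else 1))
      = real (card {A\<in>AA K S. T \<subseteq> A}) * real (S choose d) * pol v S T (real d)" .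
  have "card (AD K S d) = (\<Sum>A\<in>AA K S. card {D. D \<subseteq> A \<and> card D = d})"
    unfolding AD_Sigma by (rule card_SigmaI) (auto simp: finite_AA fin)
  also have "\<dots> = (\<Sum>A\<in>AA K S. S choose d)"
  proof (rule sum.cong[OF refl])
    fix A assume A: "A \<in> AA K S"
    show "card {D. D \<subseteq> A \<and> card D = d} = S choose d" using n_subsets[OF fin[OF A], of d] A by (simp add: AA_def)
  qed
  finally have den: "real (card (AD K S d)) = real (card (AA K S)) * real (S choose d)" by simp
  have Cp: "real (S choose d) > 0" using assms by simp
  show ?thesis unfolding kap_def num den using Cp by (simp add: field_simps)
qed

definition cub :: "(real \<Rightarrow> real) \<Rightarrow> bool" where
  "cub f \<longleftrightarrow> (\<exists>a b c. \<forall>x. f x = a * x + b * x^2 + c * x^3)"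

lemma cub_add: "cub f \<Longrightarrow> cub g \<Longrightarrow> cub (\<lambda>x. f x + g x)"
  unfolding cub_def
proof (elim exE)
  fix a b c a' b' c' assume "\<forall>x. f x = a * x + b * x^2 + c * x^3" "\<forall>x. g x = a' * x + b' * x^2 + c' * x^3"
  thus "\<exists>a b c. \<forall>x. f x + g x = a * x + b * x^2 + c * x^3"
    by (intro exI[of _ "a+a'"] exI[of _ "b+b'"] exI[of _ "c+c'"]) (simp add: algebra_simps)
qed

lemma cub_scale: "cub f \<Longrightarrow> cub (\<lambda>x. k * f x)"
  unfolding cub_def
proof (elim exE)
  fix a b c assume "\<forall>x. f x = a * x + b * x^2 + c * x^3"
  thus "\<exists>a b c. \<forall>x. k * f x = a * x + b * x^2 + c * x^3"
    by (intro exI[of _ "k*a"] exI[of _ "k*b"] exI[of _ "k*c"]) (simp add: algebra_simps)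
qed

lemma cub_zero: "cub (\<lambda>x. 0)" unfolding cub_def by (intro exI[of _ 0]) simp

lemma cub_sum: "finite I \<Longrightarrow> (\<And>i. i \<in> I \<Longrightarrow> cub (f i)) \<Longrightarrow> cub (\<lambda>x. \<Sum>i\<in>I. f i x)"
  by (induction I rule: finite_induct) (auto intro: cub_add cub_zero)

lemma cub_ff: assumes "1 \<le> u" "u \<le> 3" shows "cub (\<lambda>x. ff x u)"
proof -
  have "u = 1 \<or> u = 2 \<or> u = 3" using assms by auto
  thus ?thesis
  proof (elim disjE)
    assume "u = 1" thus ?thesis unfolding cub_def ff_def by (intro exI[of _ 1] exI[of _ 0]) simp
  next
    assume "u = 2" thus ?thesis unfolding cub_def ff_def
      by (intro exI[of _ "-1"] exI[of _ 1] exI[of _ 0]) (simp add: numeral_2_eq_2 power2_eq_square algebra_simps)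
  next
    assume "u = 3" thus ?thesis unfolding cub_def ff_def
      by (intro exI[of _ 2] exI[of _ "-3"] exI[of _ 1]) (simp add: numeral_3_eq_3 power2_eq_square power3_eq_cube algebra_simps)
  qed
qed

lemma cub_pol: assumes "finite T" "card T \<le> 3" shows "cub (pol v S T)"
proof -
  have "cub (\<lambda>x. (-1) * (\<Sum>U\<in>Pow T - {{}}. ((-1 / (real v - 1) - 1) ^ card U / ff (real S) (card U)) * ff x (card U)))"
  proof (rule cub_scale, rule cub_sum)
    show "finite (Pow T - {{}})" using assms by simp
  next
    fix U assume U: "U \<in> Pow T - {{}}"
    have "finite U" using U assms finite_subset by auto
    hence "1 \<le> card U" using U by (auto simp: Suc_le_eq card_gt_0_iff)
    moreover have "card U \<le> 3" using U assms card_mono[of T U] by auto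
    ultimately show "cub (\<lambda>x. ((-1 / (real v - 1) - 1) ^ card U / ff (real S) (card U)) * ff x (card U))"
      by (intro cub_scale cub_ff)
  qed
  moreover have "pol v S T = (\<lambda>x. (-1) * (\<Sum>U\<in>Pow T - {{}}. ((-1 / (real v - 1) - 1) ^ card U / ff (real S) (card U)) * ff x (card U)))"
    unfolding pol_def by (auto simp: field_simps)
  ultimately show ?thesis by simp
qed




lemma pos_mult_le0: "(0::real) < k \<Longrightarrow> k * y \<le> 0 \<Longrightarrow> y \<le> 0"
  by (simp add: mult_le_0_iff)
lemma neg_mult_le0: "(k::real) < 0 \<Longrightarrow> k * y \<le> 0 \<Longrightarrow> 0 \<le> y"
  by (simp add: mult_le_0_iff)

lemma cubic_gap:
  fixes c0 c1 c2 c3 :: real and a b S :: nat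
  assumes c0: "c0 < 0"
    and le: "\<And>n::nat. 1 \<le> n \<Longrightarrow> n \<le> S \<Longrightarrow> c0 + c1 * real n + c2 * (real n)^2 + c3 * (real n)^3 \<le> 0"
    and ab: "1 \<le> a" "a + 2 \<le> b" "b + 1 \<le> S"
    and fa: "c0 + c1 * real a + c2 * (real a)^2 + c3 * (real a)^3 = 0" and fb: "c0 + c1 * real b + c2 * (real b)^2 + c3 * (real b)^3 = 0"
  shows False
proof -
  define f where "f = (\<lambda>x::real. c0 + c1 * x + c2 * x^2 + c3 * x^3)"
  define s where "s = real a + real b"
  define p where "p = real a * real b"
  define e where "e = c2 + c3 * s"
  define g where "g = (\<lambda>x::real. c3 * x + e)"
  define u1 where "u1 = c1 - p * c3 + s * e"
  define u0 where "u0 = c0 - p * e"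
  have L: "f x - (x - a) * (x - b) * g x = u0 + u1 * x" for x
    unfolding f_def g_def u0_def u1_def e_def s_def p_def
    by (simp add: algebra_simps power2_eq_square power3_eq_cube)
  have La: "u0 + u1 * a = 0" using L[of a] fa by (simp add: f_def)
  have Lb: "u0 + u1 * b = 0" using L[of b] fb by (simp add: f_def)
  have "u1 * (real b - real a) = (u0 + u1 * b) - (u0 + u1 * a)" by (simp add: algebra_simps)
  hence "u1 * (real b - real a) = 0" using La Lb by simp
  moreover have "real b - real a \<noteq> 0" using ab by simp
  ultimately have u1: "u1 = 0" by simp
  hence u0: "u0 = 0" using La by simp
  have F: "f x = (x - a) * (x - b) * g x" for x using L[of x] u0 u1 by simp
  have fle: "f (real n) \<le> 0" if "n \<le> S" for n
  proof (cases "n = 0")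
    case True thus ?thesis using c0 by (simp add: f_def)
  next
    case False thus ?thesis using le[of n] that unfolding f_def by simp
  qed
  have f1: "f (real a - 1) \<le> 0" using fle[of "a - 1"] ab by (simp add: of_nat_diff)
  have f2: "f (real a + 1) \<le> 0" using fle[of "a + 1"] ab by (simp add: add.commute)
  have f3: "f (real b - 1) \<le> 0" using fle[of "b - 1"] ab by (simp add: of_nat_diff)
  have f4: "f (real b + 1) \<le> 0" using fle[of "b + 1"] ab by (simp add: add.commute)
  have g1: "g (real a - 1) \<le> 0"
    by (rule pos_mult_le0[of "real b + 1 - real a"]) (use f1 ab in \<open>auto simp: F algebra_simps\<close>)
  have g2: "0 \<le> g (real a + 1)"
    by (rule neg_mult_le0[of "real a + 1 - real b"]) (use f2 ab in \<open>auto simp: F algebra_simps\<close>)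
  have g3: "0 \<le> g (real b - 1)"
    by (rule neg_mult_le0[of "real a + 1 - real b"]) (use f3 ab in \<open>auto simp: F algebra_simps\<close>)
  have g4: "g (real b + 1) \<le> 0"
    by (rule pos_mult_le0[of "real b + 1 - real a"]) (use f4 ab in \<open>auto simp: F algebra_simps\<close>)
  have c3: "c3 = 0" using g1 g2 g3 g4 unfolding g_def by (simp add: algebra_simps)
  have "e = 0" using g1 g2 c3 unfolding g_def by simp
  hence "f 0 = 0" using F[of 0] c3 by (simp add: g_def)
  thus False using c0 by (simp add: f_def)
qed


lemma deriv_step:
  fixes m k :: "nat \<Rightarrow> real"
  assumes fin: "finite I" and mpos: "\<And>r. r \<in> I \<Longrightarrow> m r > 0"
    and opt: "\<And>\<epsilon>. 0 < \<epsilon> \<Longrightarrow> \<epsilon> < 1 \<Longrightarrow> (\<Prod>r\<in>I. m r + \<epsilon> * (k r - m r)) \<le> (\<Prod>r\<in>I. m r)"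
  shows "(\<Sum>r\<in>I. k r / m r) \<le> real (card I)"
proof (rule ccontr)
  assume "\<not> ?thesis"
  hence gt: "(\<Sum>r\<in>I. k r / m r) > real (card I)" by simp
  define P where "P = (\<lambda>A u. \<Prod>r\<in>A. m r + u * (k r - m r))"
  have d: "((\<lambda>u. m r + u * (k r - m r)) has_field_derivative (k r - m r)) (at 0)" for r
    by (auto intro!: derivative_eq_intros)
  have D: "(P I has_field_derivative (P I 0 * (\<Sum>r\<in>I. (k r - m r) / (m r + 0 * (k r - m r))))) (at 0)"
    unfolding P_def
    by (rule has_field_derivative_prod'[where f="\<lambda>r u. m r + u * (k r - m r)"]) (use mpos d in \<open>force+\<close>)
  have P0: "P I 0 = (\<Prod>r\<in>I. m r)" by (simp add: P_def)
  have P0pos: "P I 0 > 0" unfolding P0 using mpos by (simp add: prod_pos)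
  have "(\<Sum>r\<in>I. (k r - m r) / (m r + 0 * (k r - m r))) = (\<Sum>r\<in>I. k r / m r) - real (card I)"
  proof -
    have "(\<Sum>r\<in>I. (k r - m r) / (m r + 0 * (k r - m r))) = (\<Sum>r\<in>I. k r / m r - 1)"
    proof (rule sum.cong[OF refl])
      fix r assume "r \<in> I" hence "m r \<noteq> 0" using mpos by force
      thus "(k r - m r) / (m r + 0 * (k r - m r)) = k r / m r - 1" by (simp add: field_simps)
    qed
    thus ?thesis by (simp add: sum_subtractf)
  qed
  hence pos: "P I 0 * (\<Sum>r\<in>I. (k r - m r) / (m r + 0 * (k r - m r))) > 0" using gt P0pos by simp
  obtain \<delta> where \<delta>: "\<delta> > 0" "\<And>h. h > 0 \<Longrightarrow> h < \<delta> \<Longrightarrow> P I 0 < P I (0 + h)"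
    using DERIV_pos_inc_right[OF D pos] by blast
  define h where "h = min (\<delta>/2) (1/2)"
  have h: "h > 0" "h < \<delta>" "h < 1" using \<delta> by (auto simp: h_def)
  have "P I 0 < P I h" using \<delta>(2)[OF h(1,2)] by simp
  moreover have "P I h \<le> P I 0" unfolding P_def using opt[OF h(1,3)] by simp
  ultimately show False by simp
qed




lemma Tset_fin: assumes "r < nparams v K" "v \<ge> 2"
  shows "finite (Tset v K r)" "card (Tset v K r) \<le> 3"
proof -
  have T: "TL v K r \<in> set (Tlist K)" by (rule regvec_entry(3)[OF assms])
  hence "length (TL v K r) \<le> 3" unfolding set_Tlist by auto
  thus "finite (Tset v K r)" "card (Tset v K r) \<le> 3" unfolding Tset_def
    using card_length[of "TL v K r"] by auto
qed

lemma kap_nonneg: assumes "v \<ge> 2" shows "kap v K S T d \<ge> 0"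
proof -
  have "1 - (\<Prod>k\<in>T. if k \<in> D then -1 / (real v - 1) else 1) \<ge> 0" for D
  proof -
    have q: "\<bar>-1 / (real v - 1)\<bar> \<le> 1" using assms by simp
    have "\<bar>\<Prod>k\<in>T. if k \<in> D then -1 / (real v - 1) else (1::real)\<bar> = (\<Prod>k\<in>T. \<bar>if k \<in> D then -1 / (real v - 1) else 1\<bar>)"
      by (rule abs_prod)
    also have "\<dots> \<le> 1" by (rule prod_le_1) (use q in auto)
    finally show ?thesis by linarith
  qed
  thus ?thesis unfolding kap_def by (intro divide_nonneg_nonneg mult_nonneg_nonneg sum_nonneg) auto
qed

lemma AD_ne: "d \<le> S \<Longrightarrow> S \<le> K \<Longrightarrow> ({..<S}, {..<d}) \<in> AD K S d"
  by (auto simp: AD_def)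

lemma region_card_pos: assumes "v \<ge> 2" "d \<le> S" "S \<le> K"
  shows "real (card (depth_region v K S d)) > 0"
proof -
  have "card (AD K S d) > 0" using AD_ne[OF assms(2,3)] finite_AD card_gt_0_iff by blast
  thus ?thesis unfolding card_region[OF assms(1)] using assms(1) by simp
qed

lemma xiw_design: assumes v: "v \<ge> 2" and SK: "S \<le> K" and w: "\<forall>d\<in>{1..S}. w d \<ge> 0" and ws: "(\<Sum>d=1..S. w d) = 1"
  shows "is_design v K S (xiw v K S w)"
proof -
  have u1: "(\<Sum>x\<in>design_region v K S. uniform_depth_design v K S d x) = 1" if "d \<in> {1..S}" for d
  proof -
    have "(\<Sum>x\<in>design_region v K S. uniform_depth_design v K S d x) =
        (\<Sum>x\<in>design_region v K S. uniform_depth_design v K S d x * 1)" by simp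
    also have "\<dots> = real (card (depth_region v K S d)) / real (card (depth_region v K S d))"
      unfolding uniform_sum by simp
    also have "\<dots> = 1" using region_card_pos[OF v _ SK, of d] that by simp
    finally show ?thesis .
  qed
  have "xiw v K S w x \<ge> 0" for x
    unfolding xiw_def using w by (intro sum_nonneg mult_nonneg_nonneg) (auto simp: uniform_depth_design_def)
  moreover have "xiw v K S w x = 0" if "x \<notin> design_region v K S" for x
  proof -
    have "x \<notin> depth_region v K S d" for d using that depth_sub by blast
    thus ?thesis unfolding xiw_def by (intro sum.neutral) (auto simp: uniform_depth_design_def)
  qed
  moreover have "(\<Sum>x\<in>design_region v K S. xiw v K S w x) = 1"
  proof -
    have "(\<Sum>x\<in>design_region v K S. xiw v K S w x) = (\<Sum>d=1..S. w d * (\<Sum>x\<in>design_region v K S. uniform_depth_design v K S d x))"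
      unfolding xiw_def by (subst sum.swap) (simp add: sum_distrib_left)
    also have "\<dots> = (\<Sum>d=1..S. w d)" by (intro sum.cong refl) (simp add: u1)
    finally show ?thesis using ws by simp
  qed
  ultimately show ?thesis unfolding is_design_def by blast
qed

lemma zero_design: assumes v: "v \<ge> 2" and SK: "S \<le> K" and K: "K \<ge> 1"
  shows "\<exists>\<eta>. is_design v K S \<eta> \<and> det (info_matrix v K S \<eta>) = 0"
proof -
  define i0 where "i0 = map (\<lambda>k. if k < S then 1 else (0::nat)) [0..<K]"
  define x0 where "x0 = (i0, i0)"
  have x0: "x0 \<in> design_region v K S"
    unfolding design_region_def x0_def
    using SK v by (auto simp: profiles_def i0_def intro!: exI[of _ "{..<S}"])
  define \<eta> where "\<eta> = (\<lambda>x. if x = x0 then (1::real) else 0)"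
  have "is_design v K S \<eta>" unfolding is_design_def \<eta>_def using x0 finite_region
    by (auto simp: sum.delta)
  moreover have "info_matrix v K S \<eta> = 0\<^sub>m (nparams v K) (nparams v K)"
    by (rule eq_matI) (auto simp: info_matrix_def \<eta>_def x0_def dim_regvec intro!: sum.neutral)
  moreover have "nparams v K > 0" using v K by (simp add: nparams_def)
  ultimately show ?thesis by auto
qed


theorem theorem3:
  fixes v K S :: nat and w :: "nat \<Rightarrow> real"
  assumes "v \<ge> 2" and "K \<ge> 3" and "3 \<le> S" and "S \<le> K"
    and "\<forall>d\<in>{1..S}. w d \<ge> 0" and "(\<Sum>d=1..S. w d) = 1"
    and "D_optimal v K S (\<lambda>x. \<Sum>d=1..S. w d * uniform_depth_design v K S d x)"
  shows "card {d\<in>{1..S}. w d > 0} \<le> 3 \<and>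
         (\<exists>ds\<in>{1..S}. {d\<in>{1..S}. w d > 0} \<subseteq> {ds, ds + 1, S})"
proof -
  note v = assms(1) and SK = assms(4) and w = assms(5) and ws = assms(6)
  define p where "p = nparams v K"
  have ppos: "p > 0" using v assms(2) by (simp add: p_def nparams_def)
  have opt: "D_optimal v K S (xiw v K S w)" unfolding xiw_def by (rule assms(7))
  hence nz: "det (info_matrix v K S (xiw v K S w)) \<noteq> 0"
    and mx: "\<And>\<eta>. is_design v K S \<eta> \<Longrightarrow> det (info_matrix v K S \<eta>) \<le> det (info_matrix v K S (xiw v K S w))"
    unfolding D_optimal_def by auto
  define m where "m r = mu v K S w (Tset v K r)" for r
  have detM: "det (info_matrix v K S (xiw v K S w)) = (\<Prod>r<p. m r) * det (Bmat v K)"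
    unfolding det_w[OF v] m_def p_def ..
  have detpos: "det (info_matrix v K S (xiw v K S w)) > 0"
  proof -
    obtain \<eta> where "is_design v K S \<eta>" "det (info_matrix v K S \<eta>) = 0"
      using zero_design[OF v SK] assms(2) by auto
    hence "0 \<le> det (info_matrix v K S (xiw v K S w))" using mx by metis
    thus ?thesis using nz by simp
  qed
  have mnn: "m r \<ge> 0" for r
    unfolding m_def mu_def using w kap_nonneg[OF v] by (intro sum_nonneg mult_nonneg_nonneg) auto
  have Pne: "(\<Prod>r<p. m r) \<noteq> 0" using detpos unfolding detM by (metis mult_zero_left less_irrefl)
  have mpos: "m r > 0" if "r < p" for r
  proof -
    have "m r \<noteq> 0" using Pne that by auto
    thus ?thesis using mnn[of r] by simp
  qed
  have Ppos: "(\<Prod>r<p. m r) > 0" using mpos by (intro prod_pos) auto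
  have Bpos: "det (Bmat v K) > 0" using detpos detM Ppos by (simp add: zero_less_mult_iff)
  define h where "h d = (\<Sum>r<p. kap v K S (Tset v K r) d / m r)" for d
  have hle: "h d0 \<le> real p" if d0: "d0 \<in> {1..S}" for d0
  proof -
    have "(\<Sum>r\<in>{..<p}. kap v K S (Tset v K r) d0 / m r) \<le> real (card {..<p})"
    proof (rule deriv_step)
      fix \<epsilon> :: real assume e: "0 < \<epsilon>" "\<epsilon> < 1"
      define w' where "w' d = (1 - \<epsilon>) * w d + \<epsilon> * (if d = d0 then 1 else 0)" for d
      have w'nn: "\<forall>d\<in>{1..S}. w' d \<ge> 0" using w e unfolding w'_def by auto
      have w's: "(\<Sum>d=1..S. w' d) = 1"
        unfolding w'_def using d0 ws by (simp add: sum.distrib sum_distrib_left[symmetric])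
      have mu': "mu v K S w' T = mu v K S w T + \<epsilon> * (kap v K S T d0 - mu v K S w T)" for T
      proof -
        have "mu v K S w' T = (\<Sum>d=1..S. (1 - \<epsilon>) * (w d * kap v K S T d) + \<epsilon> * (if d = d0 then kap v K S T d else 0))"
          unfolding mu_def by (intro sum.cong refl) (simp add: w'_def algebra_simps)
        also have "\<dots> = (1 - \<epsilon>) * mu v K S w T + \<epsilon> * kap v K S T d0"
          unfolding mu_def using d0 by (simp add: sum.distrib sum_distrib_left[symmetric])
        finally show ?thesis by (simp add: algebra_simps)
      qed
      have "det (info_matrix v K S (xiw v K S w')) \<le> det (info_matrix v K S (xiw v K S w))"
        by (rule mx[OF xiw_design[OF v SK w'nn w's]])
      hence "(\<Prod>r<p. m r + \<epsilon> * (kap v K S (Tset v K r) d0 - m r)) * det (Bmat v K) \<le> (\<Prod>r<p. m r) * det (Bmat v K)"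
        unfolding detM unfolding det_w[OF v] mu' m_def p_def .
      thus "(\<Prod>r\<in>{..<p}. m r + \<epsilon> * (kap v K S (Tset v K r) d0 - m r)) \<le> (\<Prod>r\<in>{..<p}. m r)"
        using Bpos by simp
    qed (use mpos in auto)
    thus ?thesis by (simp add: h_def)
  qed
  have hsum: "(\<Sum>d=1..S. w d * h d) = real p"
  proof -
    have "(\<Sum>d=1..S. w d * h d) = (\<Sum>r<p. (\<Sum>d=1..S. w d * kap v K S (Tset v K r) d) / m r)"
      unfolding h_def by (simp add: sum_distrib_left sum_divide_distrib) (rule sum.swap)
    also have "\<dots> = (\<Sum>r<p. 1)"
    proof (rule sum.cong[OF refl])
      fix r assume "r \<in> {..<p}"
      hence "m r > 0" using mpos by simp
      thus "(\<Sum>d=1..S. w d * kap v K S (Tset v K r) d) / m r = 1" unfolding m_def mu_def by simp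
    qed
    finally show ?thesis by simp
  qed
  have heq: "h d = real p" if "d \<in> {1..S}" "w d > 0" for d
  proof -
    have "(\<Sum>d=1..S. w d * (real p - h d)) = real p * (\<Sum>d=1..S. w d) - (\<Sum>d=1..S. w d * h d)"
      by (simp add: algebra_simps sum_subtractf sum_distrib_left)
    hence z: "(\<Sum>d=1..S. w d * (real p - h d)) = 0" using ws hsum by simp
    have nn: "\<forall>d\<in>{1..S}. w d * (real p - h d) \<ge> 0" using w hle by auto
    have all: "\<forall>x\<in>{1..S}. w x * (real p - h x) = 0"
      using z nn sum_nonneg_eq_0_iff[of "{1..S}" "\<lambda>d. w d * (real p - h d)"] by simp
    have "w d * (real p - h d) = 0" using all that(1) by blast
    thus ?thesis using that by simp
  qed
  define cr where "cr r = 2 * real (card {A\<in>AA K S. Tset v K r \<subseteq> A}) / real (card (AA K S))" for r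
  have "cub (\<lambda>x. \<Sum>r<p. (cr r / m r) * pol v S (Tset v K r) x)"
  proof (rule cub_sum)
    fix r assume "r \<in> {..<p}"
    hence r: "r < nparams v K" by (simp add: p_def)
    show "cub (\<lambda>x. (cr r / m r) * pol v S (Tset v K r) x)"
      by (rule cub_scale, rule cub_pol) (use Tset_fin[OF r v] in auto)
  qed simp
  then obtain c1 c2 c3 where H: "\<And>x. (\<Sum>r<p. (cr r / m r) * pol v S (Tset v K r) x) = c1 * x + c2 * x^2 + c3 * x^3"
    unfolding cub_def by blast
  have hH: "h d = c1 * real d + c2 * (real d)^2 + c3 * (real d)^3" if "d \<le> S" for d
  proof -
    have "h d = (\<Sum>r<p. (cr r / m r) * pol v S (Tset v K r) (real d))"
      unfolding h_def using that by (intro sum.cong refl) (simp add: kap_eq cr_def)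
    thus ?thesis using H by simp
  qed
  define W where "W = {d\<in>{1..S}. w d > 0}"
  have gap: "b \<le> a + 1" if "a \<in> W" "b \<in> W" "a < b" "b \<noteq> S" for a b
  proof (rule ccontr)
    assume "\<not> b \<le> a + 1"
    show False
    proof (rule cubic_gap[of "- real p" S c1 c2 c3 a b])
      show "- real p < 0" using ppos by simp
      fix n :: nat assume "1 \<le> n" "n \<le> S"
      thus "- real p + c1 * real n + c2 * (real n) ^ 2 + c3 * (real n) ^ 3 \<le> 0"
        using hle[of n] hH[of n] by simp
    next
      show "1 \<le> a" "a + 2 \<le> b" "b + 1 \<le> S" using that \<open>\<not> b \<le> a + 1\<close> by (auto simp: W_def)
      show "- real p + c1 * real a + c2 * (real a) ^ 2 + c3 * (real a) ^ 3 = 0"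
        using heq[of a] hH[of a] that by (auto simp: W_def)
      show "- real p + c1 * real b + c2 * (real b) ^ 2 + c3 * (real b) ^ 3 = 0"
        using heq[of b] hH[of b] that by (auto simp: W_def)
    qed
  qed
  have "\<exists>ds\<in>{1..S}. W \<subseteq> {ds, ds + 1, S}"
  proof (cases "W - {S} = {}")
    case True
    hence "W \<subseteq> {S, S + 1, S}" by auto
    moreover have "S \<in> {1..S}" using assms(3) by simp
    ultimately show ?thesis by blast
  next
    case False
    define ds where "ds = Min (W - {S})"
    have fW: "finite (W - {S})" by (simp add: W_def)
    have ds: "ds \<in> W - {S}" unfolding ds_def using Min_in[OF fW False] .
    have "W \<subseteq> {ds, ds + 1, S}"
    proof
      fix b assume b: "b \<in> W"
      show "b \<in> {ds, ds + 1, S}"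
      proof (cases "b = S \<or> b = ds")
        case True thus ?thesis by auto
      next
        case False
        hence "b \<in> W - {S}" using b by auto
        hence "ds \<le> b" unfolding ds_def using fW by simp
        hence "ds < b" using False by simp
        hence "b \<le> ds + 1" using gap[of ds b] ds b False by auto
        thus ?thesis using \<open>ds < b\<close> by auto
      qed
    qed
    moreover have "ds \<in> {1..S}" using ds by (auto simp: W_def)
    ultimately show ?thesis by blast
  qed
  then obtain ds where ds: "ds \<in> {1..S}" "W \<subseteq> {ds, ds + 1, S}" by blast
  have "card W \<le> card {ds, ds + 1, S}" by (rule card_mono[OF _ ds(2)]) simp
  also have "\<dots> \<le> 3" by (simp add: card_insert_if)
  finally show ?thesis using ds unfolding W_def by blast
qed


end
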